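(* Let $M$ be the sub-extreme Kerr spacetime with mass $M_0$ and rotation parameter $a$, $0<a<M_0$, in advanced coordinates $(v,r,\theta,\varphi)$: $$ds^2=-\Big(1-\frac{2M_0r}{\rho^2}\Big)dv^2+\rho^2d\theta^2+\Big[r^2+a^2+\frac{2M_0ra^2\sin^2\theta}{\rho^2}\Big]\sin^2\theta\,d\varphi^2-\frac{4M_0ar\sin^2\theta}{\rho^2}dv\,d\varphi+2\,dv\,dr-2a\sin^2\theta\,dr\,d\varphi,$$ $\rho^2=r^2+a^2\cos^2\theta$, with time orientation such that $-\partial_r$ is future-directed. Let $r_\pm=M_0\pm\sqrt{M_0^2-a^2}$ and $$X=\Big\{(v,r,\theta,\varphi):\ r_-<r<r_+,\ 0<\theta<\pi,\ \cot\theta>\frac{M_0-r}{\sqrt{2M_0r-a^2-r^2}}\Big\}.$$ Then no closed trapped surface and no closed marginally trapped surface is contained in $X$.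
   Context: A surface is a spacelike embedded submanifold $S$ of codimension two. With future-directed null normal fields $\ell^a,\mathcal k^a$ on $S$ normalized by $\mathcal k^a\ell_a=-1$, set $\Theta^S_\ell=h^{ij}e_i^ae_j^b\nabla_a\ell_b$ (with $\{e_i\}$ a basis of $T_qS$ and $h^{ij}$ the inverse of the induced metric components) and likewise $\Theta^S_{\mathcal k}$. A closed trapped (resp. marginally trapped) surface is a compact surface without boundary with $\Theta^S_\ell<0,\Theta^S_{\mathcal k}<0$ (resp. both $\le0$) at every point. *)

theory Defs
  imports "HOL-Analysis.Analysis"
begin

(* Points of the (phi-unwrapped) advanced Kerr chart: p $ 1 = v, p $ 2 = r,
   p $ 3 = theta, p $ 4 = phi  (note: in type 4 the numeral 4 is the fourth index). *)

definition kerr_rho2 :: "real \<Rightarrow> real^4 \<Rightarrow> real" where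
  "kerr_rho2 a p = (p$2)^2 + a^2 * (cos (p$3))^2"

definition kerr_g :: "real \<Rightarrow> real \<Rightarrow> real^4 \<Rightarrow> real^4 \<Rightarrow> real^4 \<Rightarrow> real" where
  "kerr_g M0 a p u w =
    (let r = p$2; th = p$3; rho2 = kerr_rho2 a p; ssq = (sin th)^2 in
      - (1 - 2*M0*r/rho2) * (u$1) * (w$1)
      + rho2 * (u$3) * (w$3)
      + (r^2 + a^2 + 2*M0*r*a^2* ssq/rho2) * ssq * (u$4) * (w$4)
      - (2*M0*a*r* ssq/rho2) * ((u$1)*(w$4) + (u$4)*(w$1))
      + ((u$1)*(w$2) + (u$2)*(w$1))
      - a* ssq * ((u$2)*(w$4) + (u$4)*(w$2)))"

definition kerr_comp :: "real \<Rightarrow> real \<Rightarrow> real^4 \<Rightarrow> 4 \<Rightarrow> 4 \<Rightarrow> real" where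
  "kerr_comp M0 a p i j = kerr_g M0 a p (axis i 1) (axis j 1)"

definition pdiff :: "4 \<Rightarrow> (real^4 \<Rightarrow> real) \<Rightarrow> real^4 \<Rightarrow> real" where
  "pdiff k F p = deriv (\<lambda>t. F (p + t *\<^sub>R axis k 1)) 0"

definition kerr_christ :: "real \<Rightarrow> real \<Rightarrow> real^4 \<Rightarrow> 4 \<Rightarrow> 4 \<Rightarrow> 4 \<Rightarrow> real" where
  "kerr_christ M0 a p c i j =
     (pdiff i (\<lambda>q. kerr_comp M0 a q c j) p + pdiff j (\<lambda>q. kerr_comp M0 a q c i) p
      - pdiff c (\<lambda>q. kerr_comp M0 a q i j) p) / 2"

(* g(Y, nabla_X l), where dX = derivative of the components of l along X, L = l at p *)
definition kerr_B :: "real \<Rightarrow> real \<Rightarrow> real^4 \<Rightarrow> real^4 \<Rightarrow> real^4 \<Rightarrow> real^4 \<Rightarrow> real^4 \<Rightarrow> real" where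
  "kerr_B M0 a p X Y dX L =
     kerr_g M0 a p Y dX
     + (\<Sum>c\<in>UNIV. \<Sum>i\<in>UNIV. \<Sum>j\<in>UNIV. kerr_christ M0 a p c i j * (Y$c) * (X$i) * (L$j))"

fun Ck :: "nat \<Rightarrow> 'a::real_normed_vector set \<Rightarrow> ('a \<Rightarrow> 'b::real_normed_vector) \<Rightarrow> bool" where
  "Ck 0 U f = continuous_on U f"
| "Ck (Suc n) U f = (\<exists>f'. (\<forall>x\<in>U. (f has_derivative f' x) (at x)) \<and> (\<forall>v. Ck n U (\<lambda>x. f' x v)))"

definition smooth_on :: "'a::real_normed_vector set \<Rightarrow> ('a \<Rightarrow> 'b::real_normed_vector) \<Rightarrow> bool" where
  "smooth_on U f \<longleftrightarrow> (\<forall>n. Ck n U f)"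

definition surface_chart :: "(real^4) set \<Rightarrow> (real \<times> real \<Rightarrow> real^4) \<Rightarrow> (real \<times> real) set \<Rightarrow> (real^4) set \<Rightarrow> bool" where
  "surface_chart S f U W \<longleftrightarrow> open U \<and> open W \<and> smooth_on U f
     \<and> (\<forall>u\<in>U. inj (frechet_derivative f (at u)))
     \<and> (\<exists>g. homeomorphism U (S \<inter> W) f g)"

definition embedded_surface :: "(real^4) set \<Rightarrow> bool" where
  "embedded_surface S \<longleftrightarrow> (\<forall>p\<in>S. \<exists>f U W. surface_chart S f U W \<and> p \<in> W)"

definition ch_e1 :: "(real \<times> real \<Rightarrow> real^4) \<Rightarrow> real \<times> real \<Rightarrow> real^4" where
  "ch_e1 f u = frechet_derivative f (at u) (1, 0)"
definition ch_e2 :: "(real \<times> real \<Rightarrow> real^4) \<Rightarrow> real \<times> real \<Rightarrow> real^4" where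
  "ch_e2 f u = frechet_derivative f (at u) (0, 1)"

definition spacelike_surface :: "real \<Rightarrow> real \<Rightarrow> (real^4) set \<Rightarrow> bool" where
  "spacelike_surface M0 a S \<longleftrightarrow> (\<forall>f U W u. surface_chart S f U W \<and> u \<in> U \<longrightarrow>
     (let p = f u; e1 = ch_e1 f u; e2 = ch_e2 f u;
          h11 = kerr_g M0 a p e1 e1; h12 = kerr_g M0 a p e1 e2; h22 = kerr_g M0 a p e2 e2
      in h11 > 0 \<and> h11 * h22 - h12^2 > 0))"

definition phi_shift :: "real^4 \<Rightarrow> real^4" where
  "phi_shift p = p + (2*pi) *\<^sub>R axis 4 1"

(* compact surface without boundary in the spacetime (phi periodic), represented
   by its phi-periodic lift S to the (v,r,theta,phi) chart *)
definition closed_surface :: "real \<Rightarrow> real \<Rightarrow> (real^4) set \<Rightarrow> bool" where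
  "closed_surface M0 a S \<longleftrightarrow> S \<noteq> {} \<and> embedded_surface S \<and> spacelike_surface M0 a S
     \<and> (\<forall>p. p \<in> S \<longleftrightarrow> phi_shift p \<in> S)
     \<and> compact (S \<inter> {p. 0 \<le> p$4 \<and> p$4 \<le> 2*pi})"

(* future-directed null vector; -d_r is future-directed (and null) *)
definition future_null :: "real \<Rightarrow> real \<Rightarrow> real^4 \<Rightarrow> real^4 \<Rightarrow> bool" where
  "future_null M0 a p w \<longleftrightarrow> w \<noteq> 0 \<and> kerr_g M0 a p w w = 0 \<and>
     (kerr_g M0 a p w (- axis 2 1) < 0 \<or> (\<exists>c>0. w = c *\<^sub>R (- axis 2 1)))"

definition null_normal_pair :: "real \<Rightarrow> real \<Rightarrow> (real^4) set \<Rightarrow> (real^4 \<Rightarrow> real^4) \<Rightarrow> (real^4 \<Rightarrow> real^4) \<Rightarrow> bool" where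
  "null_normal_pair M0 a S l k \<longleftrightarrow>
     (\<forall>f U W. surface_chart S f U W \<longrightarrow>
        smooth_on U (l \<circ> f) \<and> smooth_on U (k \<circ> f) \<and>
        (\<forall>u\<in>U. \<forall>w. kerr_g M0 a (f u) (l (f u)) (frechet_derivative f (at u) w) = 0
                  \<and> kerr_g M0 a (f u) (k (f u)) (frechet_derivative f (at u) w) = 0))
     \<and> (\<forall>p\<in>S. future_null M0 a p (l p) \<and> future_null M0 a p (k p)
              \<and> kerr_g M0 a p (k p) (l p) = -1
              \<and> l (phi_shift p) = l p \<and> k (phi_shift p) = k p)"

(* expansion Theta_l = h^{ij} e_i^a e_j^b nabla_a l_b at the point f u *)
definition expansion :: "real \<Rightarrow> real \<Rightarrow> (real^4 \<Rightarrow> real^4) \<Rightarrow> (real \<times> real \<Rightarrow> real^4) \<Rightarrow> real \<times> real \<Rightarrow> real" where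
  "expansion M0 a l f u =
     (let p = f u; e1 = ch_e1 f u; e2 = ch_e2 f u;
          d1 = frechet_derivative (l \<circ> f) (at u) (1, 0);
          d2 = frechet_derivative (l \<circ> f) (at u) (0, 1);
          L = l p;
          h11 = kerr_g M0 a p e1 e1; h12 = kerr_g M0 a p e1 e2; h22 = kerr_g M0 a p e2 e2;
          dt = h11 * h22 - h12^2;
          B11 = kerr_B M0 a p e1 e1 d1 L; B12 = kerr_B M0 a p e1 e2 d1 L;
          B21 = kerr_B M0 a p e2 e1 d2 L; B22 = kerr_B M0 a p e2 e2 d2 L
      in (h22 * B11 - h12 * (B12 + B21) + h11 * B22) / dt)"

definition closed_trapped_surface :: "real \<Rightarrow> real \<Rightarrow> (real^4) set \<Rightarrow> bool" where
  "closed_trapped_surface M0 a S \<longleftrightarrow> closed_surface M0 a S \<and>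
     (\<exists>l k. null_normal_pair M0 a S l k \<and>
        (\<forall>f U W u. surface_chart S f U W \<and> u \<in> U \<longrightarrow>
           expansion M0 a l f u < 0 \<and> expansion M0 a k f u < 0))"

definition closed_marginally_trapped_surface :: "real \<Rightarrow> real \<Rightarrow> (real^4) set \<Rightarrow> bool" where
  "closed_marginally_trapped_surface M0 a S \<longleftrightarrow> closed_surface M0 a S \<and>
     (\<exists>l k. null_normal_pair M0 a S l k \<and>
        (\<forall>f U W u. surface_chart S f U W \<and> u \<in> U \<longrightarrow>
           expansion M0 a l f u \<le> 0 \<and> expansion M0 a k f u \<le> 0))"

definition r_plus :: "real \<Rightarrow> real \<Rightarrow> real" where
  "r_plus M0 a = M0 + sqrt (M0^2 - a^2)"
definition r_minus :: "real \<Rightarrow> real \<Rightarrow> real" where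
  "r_minus M0 a = M0 - sqrt (M0^2 - a^2)"

definition region_X :: "real \<Rightarrow> real \<Rightarrow> (real^4) set" where
  "region_X M0 a = {p. r_minus M0 a < p$2 \<and> p$2 < r_plus M0 a \<and> 0 < p$3 \<and> p$3 < pi
      \<and> cot (p$3) > (M0 - p$2) / sqrt (2*M0*(p$2) - a^2 - (p$2)^2)}"

end

theory Submission
  imports Defs
begin


lemma hd_nth[derivative_intros]: "((\<lambda>x::real^'n. x $ i) has_derivative (\<lambda>h. h $ i)) F"
  by (rule bounded_linear_imp_has_derivative[OF bounded_linear_vec_nth])

lemma gexp: "kerr_g M0 a p u w = (\<Sum>i\<in>UNIV. \<Sum>j\<in>UNIV. kerr_comp M0 a p i j * u$i * w$j)"
  by (simp add: sum_4 kerr_comp_def kerr_g_def axis_def Let_def algebra_simps)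

lemma g_sym: "kerr_g M0 a p u w = kerr_g M0 a p w u"
  by (simp add: kerr_g_def Let_def algebra_simps)

lemma comp_sym: "kerr_comp M0 a p i j = kerr_comp M0 a p j i"
  by (simp add: kerr_comp_def g_sym)

lemma g_local: "x$2 = y$2 \<Longrightarrow> x$3 = y$3 \<Longrightarrow> kerr_g M0 a x u w = kerr_g M0 a y u w"
  by (simp add: kerr_g_def kerr_rho2_def)

lemma g_diff: assumes "kerr_rho2 a p \<noteq> 0"
  shows "\<exists>D. ((\<lambda>q. kerr_g M0 a q u w) has_derivative D) (at p)"
  unfolding kerr_g_def Let_def kerr_rho2_def
  apply (rule exI)
  apply (rule derivative_intros | use assms in \<open>simp add: kerr_rho2_def\<close>)+
  done

definition dcomp :: "real \<Rightarrow> real \<Rightarrow> real^4 \<Rightarrow> real^4 \<Rightarrow> 4 \<Rightarrow> 4 \<Rightarrow> real" where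
  "dcomp M0 a p X i j = frechet_derivative (\<lambda>q. kerr_comp M0 a q i j) (at p) X"

lemma comp_hasd: assumes "kerr_rho2 a p \<noteq> 0"
  shows "((\<lambda>q. kerr_comp M0 a q i j) has_derivative (\<lambda>X. dcomp M0 a p X i j)) (at p)"
proof -
  obtain D where "((\<lambda>q. kerr_comp M0 a q i j) has_derivative D) (at p)"
    using g_diff[OF assms, of M0 "axis i 1" "axis j 1"] unfolding kerr_comp_def by blast
  then have "(\<lambda>q. kerr_comp M0 a q i j) differentiable (at p)" by (auto simp: differentiable_def)
  from frechet_derivative_works[THEN iffD1, OF this] show ?thesis
    unfolding dcomp_def by simp
qed

lemma pdiff_eq: assumes "(F has_derivative F') (at p)"
  shows "pdiff k F p = F' (axis k 1)"
proof -
  have l: "linear F'" using assms has_derivative_linear by blast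
  have "((\<lambda>t::real. p + t *\<^sub>R axis k 1) has_derivative (\<lambda>t. t *\<^sub>R axis k 1)) (at 0)"
    by (intro derivative_eq_intros) auto
  moreover have "(F has_derivative F') (at ((\<lambda>t::real. p + t *\<^sub>R axis k 1) 0))" using assms by simp
  ultimately have "((\<lambda>t. F (p + t *\<^sub>R axis k 1)) has_derivative (\<lambda>t. F' (t *\<^sub>R axis k 1))) (at 0)"
    by (rule has_derivative_compose)
  moreover have "(\<lambda>t. F' (t *\<^sub>R axis k (1::real))) = (\<lambda>t. F' (axis k 1) * t)"
    using l by (simp add: linear_scale mult.commute)
  ultimately have "((\<lambda>t. F (p + t *\<^sub>R axis k 1)) has_real_derivative F' (axis k 1)) (at 0)"
    unfolding has_field_derivative_def
    by (metis (no_types, lifting) ext mult.commute)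
  then show ?thesis unfolding pdiff_def by (rule DERIV_imp_deriv)
qed

lemma dcomp_lin: assumes "kerr_rho2 a p \<noteq> 0"
  shows "linear (\<lambda>X. dcomp M0 a p X i j)"
  using comp_hasd[OF assms] has_derivative_linear by blast

lemma dcomp_expand: assumes "kerr_rho2 a p \<noteq> 0"
  shows "dcomp M0 a p X i j = (\<Sum>k\<in>UNIV. X$k * dcomp M0 a p (axis k 1) i j)"
proof -
  have "X = (\<Sum>k\<in>UNIV. X$k *\<^sub>R axis k 1)"
    by (simp add: vec_eq_iff forall_4 sum_4 axis_def)
  then have "dcomp M0 a p X i j = dcomp M0 a p (\<Sum>k\<in>UNIV. X$k *\<^sub>R axis k 1) i j" by simp
  also have "\<dots> = (\<Sum>k\<in>UNIV. dcomp M0 a p (X$k *\<^sub>R axis k 1) i j)"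
    by (rule linear_sum[OF dcomp_lin[OF assms]])
  also have "\<dots> = (\<Sum>k\<in>UNIV. X$k * dcomp M0 a p (axis k 1) i j)"
    using linear_scale[OF dcomp_lin[OF assms]] by simp
  finally show ?thesis .
qed

lemma pdiff_comp: assumes "kerr_rho2 a p \<noteq> 0"
  shows "pdiff k (\<lambda>q. kerr_comp M0 a q i j) p = dcomp M0 a p (axis k 1) i j"
  using pdiff_eq[OF comp_hasd[OF assms]] .

lemma dcomp_sym: "dcomp M0 a p X i j = dcomp M0 a p X j i"
  unfolding dcomp_def by (subst comp_sym) simp

lemma dcomp_zero: assumes "kerr_rho2 a p \<noteq> 0" and "k = 1 \<or> k = 4"
  shows "dcomp M0 a p (axis k 1) i j = 0"
proof -
  have "(\<lambda>t. kerr_comp M0 a (p + t *\<^sub>R axis k 1) i j) = (\<lambda>t. kerr_comp M0 a p i j)"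
    using assms(2) unfolding kerr_comp_def
    by (intro ext g_local) (auto simp: axis_def)
  then have "pdiff k (\<lambda>q. kerr_comp M0 a q i j) p = 0"
    unfolding pdiff_def by simp
  then show ?thesis using pdiff_comp[OF assms(1)] by simp
qed


definition dg :: "real \<Rightarrow> real \<Rightarrow> real^4 \<Rightarrow> real^4 \<Rightarrow> real^4 \<Rightarrow> real^4 \<Rightarrow> real" where
  "dg M0 a p X u w = (\<Sum>i\<in>UNIV. \<Sum>j\<in>UNIV. dcomp M0 a p X i j * u$i * w$j)"

lemma g_chain:
  fixes P U W :: "'a::real_normed_vector \<Rightarrow> real^4"
  assumes r: "kerr_rho2 a (P x) \<noteq> 0" and dP: "(P has_derivative DP) (at x)"
    and dU: "(U has_derivative DU) (at x)" and dW: "(W has_derivative DW) (at x)"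
  shows "((\<lambda>y. kerr_g M0 a (P y) (U y) (W y)) has_derivative
     (\<lambda>h. dg M0 a (P x) (DP h) (U x) (W x) + kerr_g M0 a (P x) (DU h) (W x)
          + kerr_g M0 a (P x) (U x) (DW h))) (at x)"
proof -
  have c: "((\<lambda>y. kerr_comp M0 a (P y) i j) has_derivative (\<lambda>h. dcomp M0 a (P x) (DP h) i j)) (at x)" for i j
    using has_derivative_compose[OF dP comp_hasd[OF r]] .
  have nu: "((\<lambda>y. U y $ i) has_derivative (\<lambda>h. DU h $ i)) (at x)" for i
    using has_derivative_compose[OF dU hd_nth] .
  have nw: "((\<lambda>y. W y $ i) has_derivative (\<lambda>h. DW h $ i)) (at x)" for i
    using has_derivative_compose[OF dW hd_nth] .
  have e: "(\<lambda>y. kerr_g M0 a (P y) (U y) (W y)) = (\<lambda>y. \<Sum>i\<in>UNIV. \<Sum>j\<in>UNIV. kerr_comp M0 a (P y) i j * U y$i * W y$j)"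
    by (simp add: gexp)
  have "((\<lambda>y. \<Sum>i\<in>UNIV. \<Sum>j\<in>UNIV. kerr_comp M0 a (P y) i j * U y$i * W y$j) has_derivative
     (\<lambda>h. \<Sum>i\<in>UNIV. \<Sum>j\<in>UNIV. (kerr_comp M0 a (P x) i j * U x$i * DW h$j +
          (kerr_comp M0 a (P x) i j * DU h$i + dcomp M0 a (P x) (DP h) i j * U x$i) * W x$j))) (at x)"
    by (intro has_derivative_sum has_derivative_mult c nu nw)
  moreover have "(\<lambda>h. \<Sum>i\<in>UNIV. \<Sum>j\<in>UNIV. (kerr_comp M0 a (P x) i j * U x$i * DW h$j +
          (kerr_comp M0 a (P x) i j * DU h$i + dcomp M0 a (P x) (DP h) i j * U x$i) * W x$j))
     = (\<lambda>h. dg M0 a (P x) (DP h) (U x) (W x) + kerr_g M0 a (P x) (DU h) (W x)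
          + kerr_g M0 a (P x) (U x) (DW h))"
    by (simp add: gexp dg_def algebra_simps sum.distrib)
  ultimately show ?thesis unfolding e by simp
qed

lemma christ_sum: assumes "kerr_rho2 a p \<noteq> 0"
  shows "(\<Sum>c\<in>UNIV. \<Sum>i\<in>UNIV. \<Sum>j\<in>UNIV. kerr_christ M0 a p c i j * Y$c * X$i * L$j)
    = (dg M0 a p X Y L + dg M0 a p L Y X - dg M0 a p Y X L) / 2"
  unfolding kerr_christ_def pdiff_comp[OF assms] dg_def
    dcomp_expand[OF assms, of M0 X] dcomp_expand[OF assms, of M0 Y] dcomp_expand[OF assms, of M0 L]
  by (simp add: sum_4 algebra_simps add_divide_distrib diff_divide_distrib)

lemma B_eq: assumes "kerr_rho2 a p \<noteq> 0"
  shows "kerr_B M0 a p X Y dX L = kerr_g M0 a p Y dX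
     + (dg M0 a p X Y L + dg M0 a p L Y X - dg M0 a p Y X L) / 2"
  unfolding kerr_B_def christ_sum[OF assms] ..

lemma dg_sym: "dg M0 a p X u w = dg M0 a p X w u"
  unfolding dg_def by (subst sum.swap) (simp add: dcomp_sym mult.commute mult.left_commute)

lemma dg_expand: assumes "kerr_rho2 a p \<noteq> 0"
  shows "dg M0 a p X u w = (\<Sum>k\<in>UNIV. X$k * dg M0 a p (axis k 1) u w)"
  unfolding dg_def dcomp_expand[OF assms, of M0 X]
  by (simp add: sum_4 algebra_simps)

lemma dg_zero: assumes "kerr_rho2 a p \<noteq> 0" and "k = 1 \<or> k = 4"
  shows "dg M0 a p (axis k 1) u w = 0"
  unfolding dg_def using dcomp_zero[OF assms] by simp

lemma dg_lin1: "dg M0 a p X (x + y) w = dg M0 a p X x w + dg M0 a p X y w"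
  and dg_lin2: "dg M0 a p X (c *\<^sub>R x) w = c * dg M0 a p X x w"
  and dg_lin3: "dg M0 a p X x (y + z) = dg M0 a p X x y + dg M0 a p X x z"
  and dg_lin4: "dg M0 a p X x (c *\<^sub>R y) = c * dg M0 a p X x y"
  unfolding dg_def by (simp_all add: sum_4 algebra_simps)

lemma g_lin1: "kerr_g M0 a p (x + y) w = kerr_g M0 a p x w + kerr_g M0 a p y w"
  and g_lin2: "kerr_g M0 a p (c *\<^sub>R x) w = c * kerr_g M0 a p x w"
  and g_lin3: "kerr_g M0 a p x (y + z) = kerr_g M0 a p x y + kerr_g M0 a p x z"
  and g_lin4: "kerr_g M0 a p x (c *\<^sub>R y) = c * kerr_g M0 a p x y"
  and g_lin5: "kerr_g M0 a p (x - y) w = kerr_g M0 a p x w - kerr_g M0 a p y w"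
  and g_lin6: "kerr_g M0 a p x (y - z) = kerr_g M0 a p x y - kerr_g M0 a p x z"
  and g_lin7: "kerr_g M0 a p (-x) w = - kerr_g M0 a p x w"
  and g_lin8: "kerr_g M0 a p x (-y) = - kerr_g M0 a p x y"
  and g_lin9: "kerr_g M0 a p 0 w = 0"
  and g_lin10: "kerr_g M0 a p x 0 = 0"
  by (simp_all add: gexp sum_4 algebra_simps)


definition sq :: "real \<Rightarrow> real \<Rightarrow> real \<Rightarrow> real" where
  "sq M0 a r = sqrt (2*M0*r - a^2 - r^2)"

definition nvec :: "real \<Rightarrow> real \<Rightarrow> real^4 \<Rightarrow> real^4" where
  "nvec M0 a p = (\<chi> i. if i = 1 then ((p$2)^2 + a^2) / (sq M0 a (p$2) * kerr_rho2 a p)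
     else if i = 2 then - sq M0 a (p$2) / kerr_rho2 a p
     else if i = 3 then 1 / kerr_rho2 a p
     else a / (sq M0 a (p$2) * kerr_rho2 a p))"

lemma nvec_comp: "nvec M0 a p $ 1 = ((p$2)^2 + a^2) / (sq M0 a (p$2) * kerr_rho2 a p)"
   "nvec M0 a p $ 2 = - sq M0 a (p$2) / kerr_rho2 a p"
   "nvec M0 a p $ 3 = 1 / kerr_rho2 a p"
   "nvec M0 a p $ 4 = a / (sq M0 a (p$2) * kerr_rho2 a p)"
  by (simp_all add: nvec_def)

lemma algC1:
  fixes r s R sn c a M0 :: real
  assumes s2: "s^2 = 2*M0*r - a^2 - r^2" and sn: "sn^2 = 1 - c^2" and R: "R = r^2 + a^2*c^2"
    and "s \<noteq> 0" "R \<noteq> 0"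
  shows "- (1 - 2*M0*r/R) * ((r^2+a^2)/(s*R)) - (2*M0*a*r * sn^2/R) * (a/(s*R)) - s/R = 0"
proof -
  have "- (1 - 2*M0*r/R) * ((r^2+a^2)/(s*R)) - (2*M0*a*r * sn^2/R) * (a/(s*R)) - s/R
      = (-(R-2*M0*r)*(r^2+a^2) - 2*M0*a^2*r * sn^2 - s^2*R) / (s*R^2)"
    using assms(4,5) by (simp add: field_simps power2_eq_square)
  also have "-(R-2*M0*r)*(r^2+a^2) - 2*M0*a^2*r * sn^2 - s^2*R = 0" unfolding s2 sn R by algebra
  finally show ?thesis by simp
qed

lemma algC2:
  fixes r s R sn c a M0 :: real
  assumes sn: "sn^2 = 1 - c^2" and R: "R = r^2 + a^2*c^2"
    and "s \<noteq> 0" "R \<noteq> 0"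
  shows "(r^2+a^2)/(s*R) - a * sn^2*(a/(s*R)) = 1/s"
proof -
  have "(r^2+a^2)/(s*R) - a * sn^2*(a/(s*R)) = (r^2+a^2 - a^2 * sn^2)/(s*R)"
    using assms(3,4) by (simp add: field_simps power2_eq_square)
  also have "r^2+a^2 - a^2 * sn^2 = R" unfolding sn R by algebra
  finally show ?thesis using assms(4) by simp
qed

lemma algC4:
  fixes r s R sn c a M0 :: real
  assumes s2: "s^2 = 2*M0*r - a^2 - r^2" and sn: "sn^2 = 1 - c^2" and R: "R = r^2 + a^2*c^2"
    and "s \<noteq> 0" "R \<noteq> 0"
  shows "(r^2 + a^2 + 2*M0*r*a^2 * sn^2/R) * sn^2 * (a/(s*R)) - (2*M0*a*r * sn^2/R) * ((r^2+a^2)/(s*R))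
      - a * sn^2*(-s/R) = 0"
proof -
  have "(r^2 + a^2 + 2*M0*r*a^2 * sn^2/R) * sn^2 * (a/(s*R)) - (2*M0*a*r * sn^2/R) * ((r^2+a^2)/(s*R))
      - a * sn^2*(-s/R) = ((R*(r^2+a^2) + 2*M0*r*a^2 * sn^2) * sn^2*a - 2*M0*a*r * sn^2*(r^2+a^2) + a * sn^2* s^2*R)/(s*R^2)"
    using assms(4,5) by (simp add: field_simps power2_eq_square)
  also have "(R*(r^2+a^2) + 2*M0*r*a^2 * sn^2) * sn^2*a - 2*M0*a*r * sn^2*(r^2+a^2) + a * sn^2* s^2*R = 0"
    unfolding s2 sn R by algebra
  finally show ?thesis by simp
qed

lemma lincomb_test:
  fixes r s R sn c a M0 X1 X2 X3 X4 :: real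
  shows "- (1 - 2*M0*r/R) * ((r^2+a^2)/(s*R)) * X1
      + R * (1/R) * X3
      + (r^2 + a^2 + 2*M0*r*a^2 * sn^2/R) * sn^2 * (a/(s*R)) * X4
      - (2*M0*a*r * sn^2/R) * (((r^2+a^2)/(s*R))*X4 + (a/(s*R))*X1)
      + (((r^2+a^2)/(s*R))*X2 + (-s/R)*X1)
      - a * sn^2 * ((-s/R)*X4 + (a/(s*R))*X2) =
     (- (1 - 2*M0*r/R) * ((r^2+a^2)/(s*R)) - (2*M0*a*r * sn^2/R) * (a/(s*R)) - s/R) * X1
     + ((r^2+a^2)/(s*R) - a * sn^2*(a/(s*R))) * X2 + (R*(1/R)) * X3
     + ((r^2 + a^2 + 2*M0*r*a^2 * sn^2/R) * sn^2 * (a/(s*R)) - (2*M0*a*r * sn^2/R) * ((r^2+a^2)/(s*R))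
      - a * sn^2*(-s/R)) * X4"
  by (simp add: algebra_simps)

definition dF :: "real \<Rightarrow> real \<Rightarrow> real^4 \<Rightarrow> real^4 \<Rightarrow> real" where
  "dF M0 a p X = X$2 / sq M0 a (p$2) + X$3"

lemma sq_sq: "2*M0*r - a^2 - r^2 \<ge> 0 \<Longrightarrow> (sq M0 a r)^2 = 2*M0*r - a^2 - r^2"
  by (simp add: sq_def)

lemma n_g: assumes s: "0 < sq M0 a (p$2)" and R: "0 < kerr_rho2 a p"
  shows "kerr_g M0 a p (nvec M0 a p) X = dF M0 a p X"
proof -
  have s2: "2*M0*(p$2) - a^2 - (p$2)^2 \<ge> 0"
  proof (rule ccontr)
    assume "\<not> ?thesis" then show False using s by (simp add: sq_def)
  qed
  have sne: "sq M0 a (p$2) \<noteq> 0" and Rne: "kerr_rho2 a p \<noteq> 0" using s R by auto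
  note C1 = algC1[OF sq_sq[OF s2] sin_squared_eq kerr_rho2_def sne Rne]
  note C2 = algC2[OF sin_squared_eq kerr_rho2_def sne Rne]
  note C4 = algC4[OF sq_sq[OF s2] sin_squared_eq kerr_rho2_def sne Rne]
  show ?thesis
    unfolding kerr_g_def Let_def nvec_comp dF_def
    apply (subst lincomb_test)
    unfolding C1 C2 C4 using Rne by simp
qed

lemma n_null: assumes s: "0 < sq M0 a (p$2)" and R: "0 < kerr_rho2 a p"
  shows "kerr_g M0 a p (nvec M0 a p) (nvec M0 a p) = 0"
  unfolding n_g[OF assms] dF_def nvec_comp using s R by simp


lemma algNull:
  fixes r s R sn c a M0 w1 w2 w3 w4 :: real
  assumes s2: "s^2 = 2*M0*r - a^2 - r^2" and sn: "sn^2 = 1 - c^2" and R: "R = r^2 + a^2*c^2"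
    and "R \<noteq> 0"
  shows "- (1 - 2*M0*r/R) * w1 * w1 + R * w3 * w3 + (r^2 + a^2 + 2*M0*r*a^2 * sn^2/R) * sn^2 * w4 * w4
    - (2*M0*a*r * sn^2/R) * (w1 * w4 + w4 * w1) + (w1 * w2 + w2 * w1) - a * sn^2 * (w2 * w4 + w4 * w2)
    = (s^2/R) * (w1 - a * sn^2 * w4)^2 + 2 * (w1 - a * sn^2 * w4) * w2 + R * w3^2
      + (sn^2/R) * ((r^2+a^2) * w4 - a * w1)^2"
proof -
  have "(- (1 - 2*M0*r/R) * w1 * w1 + R * w3 * w3 + (r^2 + a^2 + 2*M0*r*a^2 * sn^2/R) * sn^2 * w4 * w4
    - (2*M0*a*r * sn^2/R) * (w1 * w4 + w4 * w1) + (w1 * w2 + w2 * w1) - a * sn^2 * (w2 * w4 + w4 * w2))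
    - ((s^2/R) * (w1 - a * sn^2 * w4)^2 + 2 * (w1 - a * sn^2 * w4) * w2 + R * w3^2
      + (sn^2/R) * ((r^2+a^2) * w4 - a * w1)^2)
    = (- (R - 2*M0*r) * w1 * w1 + R*R * w3 * w3 + (R*(r^2 + a^2) + 2*M0*r*a^2 * sn^2) * sn^2 * w4 * w4
    - (2*M0*a*r * sn^2) * (w1 * w4 + w4 * w1) + R*(w1 * w2 + w2 * w1) - R*a * sn^2 * (w2 * w4 + w4 * w2)
    - (s^2 * (w1 - a * sn^2 * w4)^2 + R*2 * (w1 - a * sn^2 * w4) * w2 + R*R * w3^2
      + sn^2 * ((r^2+a^2) * w4 - a * w1)^2)) / R"
    using assms(4) by (simp add: field_simps power2_eq_square)
  also have "(- (R - 2*M0*r) * w1 * w1 + R*R * w3 * w3 + (R*(r^2 + a^2) + 2*M0*r*a^2 * sn^2) * sn^2 * w4 * w4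
    - (2*M0*a*r * sn^2) * (w1 * w4 + w4 * w1) + R*(w1 * w2 + w2 * w1) - R*a * sn^2 * (w2 * w4 + w4 * w2)
    - (s^2 * (w1 - a * sn^2 * w4)^2 + R*2 * (w1 - a * sn^2 * w4) * w2 + R*R * w3^2
      + sn^2 * ((r^2+a^2) * w4 - a * w1)^2)) = 0"
    unfolding s2 R using sn by algebra
  finally show ?thesis by simp
qed

lemma comp_vals: "kerr_comp M0 a p 1 1 = - (1 - 2*M0*p$2/kerr_rho2 a p)"
  "kerr_comp M0 a p 1 4 = - (2*M0*a*p$2*(sin (p$3))^2/kerr_rho2 a p)"
  "kerr_comp M0 a p 4 4 = ((p$2)^2 + a^2 + 2*M0*p$2*a^2*(sin (p$3))^2/kerr_rho2 a p) * (sin (p$3))^2"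
  by (simp_all add: kerr_comp_def kerr_g_def axis_def Let_def)

lemma algDet:
  fixes r R sn c a M0 :: real
  assumes sn: "sn^2 = 1 - c^2" and R: "R = r^2 + a^2*c^2" and "R \<noteq> 0"
  shows "(- (1 - 2*M0*r/R)) * ((r^2 + a^2 + 2*M0*r*a^2 * sn^2/R) * sn^2) - (- (2*M0*a*r * sn^2/R))^2
     = (2*M0*r - a^2 - r^2) * sn^2"
proof -
  have "(- (1 - 2*M0*r/R)) * ((r^2 + a^2 + 2*M0*r*a^2 * sn^2/R) * sn^2) - (- (2*M0*a*r * sn^2/R))^2
     - (2*M0*r - a^2 - r^2) * sn^2
     = ((- (R - 2*M0*r)) * ((R*(r^2 + a^2) + 2*M0*r*a^2 * sn^2) * sn^2) - (2*M0*a*r * sn^2)^2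
     - R*R*(2*M0*r - a^2 - r^2) * sn^2) / (R*R)"
    using assms(3) by (simp add: field_simps power2_eq_square)
  also have "((- (R - 2*M0*r)) * ((R*(r^2 + a^2) + 2*M0*r*a^2 * sn^2) * sn^2) - (2*M0*a*r * sn^2)^2
     - R*R*(2*M0*r - a^2 - r^2) * sn^2) = 0"
    unfolding R using sn by algebra
  finally show ?thesis by simp
qed

lemma detG: assumes "kerr_rho2 a p \<noteq> 0"
  shows "kerr_comp M0 a p 1 1 * kerr_comp M0 a p 4 4 - (kerr_comp M0 a p 1 4)^2
     = (2*M0*p$2 - a^2 - (p$2)^2) * (sin (p$3))^2"
  unfolding comp_vals by (rule algDet[OF sin_squared_eq kerr_rho2_def assms])

lemma s2_of: "0 < sq M0 a r \<Longrightarrow> 2*M0*r - a^2 - r^2 \<ge> 0"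
  by (rule ccontr) (simp add: sq_def)

lemma g_null_form: assumes s: "0 < sq M0 a (p$2)" and R: "kerr_rho2 a p \<noteq> 0"
  shows "kerr_g M0 a p w w = ((sq M0 a (p$2))^2/kerr_rho2 a p) * (w$1 - a * (sin (p$3))^2 * w$4)^2
     + 2 * (w$1 - a * (sin (p$3))^2 * w$4) * w$2 + kerr_rho2 a p * (w$3)^2
     + ((sin (p$3))^2/kerr_rho2 a p) * (((p$2)^2+a^2) * w$4 - a * w$1)^2"
  unfolding kerr_g_def Let_def
  by (rule algNull[OF sq_sq[OF s2_of[OF s]] sin_squared_eq kerr_rho2_def R])

lemma g_minus_dr: "kerr_g M0 a p w (- axis 2 1) = - (w$1 - a * (sin (p$3))^2 * w$4)"
  by (simp add: kerr_g_def Let_def axis_def algebra_simps)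

lemma future_dF: assumes s: "0 < sq M0 a (p$2)" and R: "0 < kerr_rho2 a p"
    and fn: "future_null M0 a p w"
  shows "dF M0 a p w \<le> 0"
proof -
  define S where "S = sq M0 a (p$2)"
  define RR where "RR = kerr_rho2 a p"
  define P where "P = w$1 - a * (sin (p$3))^2 * w$4"
  define Z where "Z = ((p$2)^2+a^2) * w$4 - a * w$1"
  define sn where "sn = sin (p$3)"
  have Rne: "kerr_rho2 a p \<noteq> 0" using R by simp
  have null: "kerr_g M0 a p w w = 0" using fn unfolding future_null_def by blast
  have c: "kerr_g M0 a p w (- axis 2 1) < 0 \<or> (\<exists>c>0. w = c *\<^sub>R (- axis 2 1))"
    using fn unfolding future_null_def by blast
  show ?thesis
  proof (cases "kerr_g M0 a p w (- axis 2 1) < 0")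
    case True
    then have P: "P > 0" unfolding P_def g_minus_dr by simp
    have "0 = (S^2/RR) * P^2 + 2 * P * w$2 + RR * (w$3)^2 + (sn^2/RR) * Z^2"
      using null g_null_form[OF s Rne, of w] R unfolding S_def RR_def P_def Z_def sn_def by simp
    then have eq: "2*RR*P*(w$2 + S * w$3) = -((S*P - RR*w$3)^2) - sn^2*Z^2"
      using R unfolding RR_def[symmetric] by (simp add: field_simps power2_eq_square)
    have "2*RR*P*(w$2 + S * w$3) \<le> 0" unfolding eq
    proof -
      have "0 \<le> (S*P - RR*w$3)^2" "0 \<le> sn^2*Z^2" by simp_all
      then show "- (S*P - RR*w$3)\<^sup>2 - sn\<^sup>2 * Z\<^sup>2 \<le> 0" by linarith
    qed
    moreover have "0 < 2*RR*P" using P R unfolding RR_def by simp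
    ultimately have le: "w$2 + S * w$3 \<le> 0"
      by (metis mult_pos_pos not_le)
    have Sp: "0 < S" using s S_def by simp
    have "w$2 / S + w$3 = (w$2 + S * w$3) / S" using Sp by (simp add: field_simps)
    also have "\<dots> \<le> 0" using le Sp by (simp add: divide_nonpos_pos)
    finally show ?thesis unfolding dF_def S_def .
  next
    case False
    then obtain c where "c > 0" "w = c *\<^sub>R (- axis 2 1)" using c by blast
    then show ?thesis using s unfolding dF_def by (simp add: axis_def)
  qed
qed


lemma nvec_alt: "nvec M0 a p =
   (((p$2)^2 + a^2) / (sqrt (2*M0*(p$2) - a^2 - (p$2)^2) * ((p$2)^2 + a^2 * (cos (p$3))^2))) *\<^sub>R axis 1 1
 + (- sqrt (2*M0*(p$2) - a^2 - (p$2)^2) / ((p$2)^2 + a^2 * (cos (p$3))^2)) *\<^sub>R axis 2 1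
 + (1 / ((p$2)^2 + a^2 * (cos (p$3))^2)) *\<^sub>R axis 3 1
 + (a / (sqrt (2*M0*(p$2) - a^2 - (p$2)^2) * ((p$2)^2 + a^2 * (cos (p$3))^2))) *\<^sub>R axis 4 1"
  by (simp add: vec_eq_iff forall_4 nvec_def axis_def sq_def kerr_rho2_def)

lemma nvec_diff: assumes s: "0 < sq M0 a (p$2)" and R: "0 < kerr_rho2 a p"
  shows "\<exists>D. (nvec M0 a has_derivative D) (at p)"
proof -
  have s2: "0 < 2*M0*(p$2) - a^2 - (p$2)^2" using s by (simp add: sq_def)
  have R2: "(p$2)^2 + a^2 * (cos (p$3))^2 \<noteq> 0" using R by (simp add: kerr_rho2_def)
  have s3: "sqrt (2*M0*(p$2) - a^2 - (p$2)^2) \<noteq> 0" using s2 by simp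
  show ?thesis
    unfolding nvec_alt[abs_def]
    apply (rule exI)
    apply (rule derivative_intros | use s2 R2 s3 in simp)+
    done
qed

lemma deriv_zero_dir:
  assumes "(F has_derivative D) (at p)" and "\<And>t. F (p + t *\<^sub>R v) = F p"
  shows "D v = 0"
proof -
  have l: "linear D" using assms(1) has_derivative_linear by blast
  have "((\<lambda>t::real. p + t *\<^sub>R v) has_derivative (\<lambda>t. t *\<^sub>R v)) (at 0)"
    by (intro derivative_eq_intros) auto
  moreover have "(F has_derivative D) (at ((\<lambda>t::real. p + t *\<^sub>R v) 0))" using assms by simp
  ultimately have "((\<lambda>t. F (p + t *\<^sub>R v)) has_derivative (\<lambda>t. D (t *\<^sub>R v))) (at 0)"
    by (rule has_derivative_compose)
  then have "((\<lambda>t. F p) has_derivative (\<lambda>t. D (t *\<^sub>R v))) (at (0::real))" using assms(2) by simp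
  moreover have "((\<lambda>t. F p) has_derivative (\<lambda>t. 0)) (at (0::real))" by simp
  ultimately have "(\<lambda>t. D (t *\<^sub>R v)) = (\<lambda>t. 0)" by (rule has_derivative_unique)
  then have "D (1 *\<^sub>R v) = 0" by meson
  then show ?thesis by simp
qed

lemma nvec_local: "x$2 = y$2 \<Longrightarrow> x$3 = y$3 \<Longrightarrow> nvec M0 a x = nvec M0 a y"
  unfolding nvec_alt by simp

lemma nvec_dzero: assumes "(nvec M0 a has_derivative D) (at p)" and "k = 1 \<or> k = 4"
  shows "D (axis k 1) = 0"
  by (rule deriv_zero_dir[OF assms(1)]) (rule nvec_local, use assms(2) in \<open>auto simp: axis_def\<close>)

definition Fn :: "real \<Rightarrow> real \<Rightarrow> real^4 \<Rightarrow> real" where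
  "Fn M0 a p = p$3 + arcsin ((p$2 - M0) / sqrt (M0^2 - a^2))"

lemma Fn_deriv: assumes d: "0 < M0^2 - a^2" and r: "\<bar>p$2 - M0\<bar> < sqrt (M0^2 - a^2)"
  shows "(Fn M0 a has_derivative dF M0 a p) (at p)"
proof -
  define d where "d = sqrt (M0^2 - a^2)"
  have dp: "0 < d" using d d_def by simp
  have x1: "-1 < (p$2 - M0)/d" "(p$2 - M0)/d < 1" using r dp unfolding d_def[symmetric]
    by (auto simp: abs_less_iff field_simps)
  have "((\<lambda>q. q$3 + arcsin ((q$2 - M0) / d)) has_derivative
     (\<lambda>h. h$3 + (h$2 / d) * inverse (sqrt (1 - ((p$2 - M0)/d)^2)))) (at p)"
  proof -
    have g: "((\<lambda>q. (q$2 - M0)/d) has_derivative (\<lambda>h. h$2/d)) (at p)"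
      using dp by (auto intro!: derivative_eq_intros)
    have "((\<lambda>q. arcsin ((q$2 - M0)/d)) has_derivative (\<lambda>h. (h$2/d) * inverse (sqrt (1 - ((p$2 - M0)/d)^2)))) (at p)"
      using has_derivative_arcsin[of "\<lambda>q. (q$2 - M0)/d" p, OF x1 g] by simp
    then show ?thesis by (intro has_derivative_add hd_nth)
  qed
  moreover have eq: "d * sqrt (1 - ((p$2 - M0)/d)^2) = sq M0 a (p$2)"
  proof -
    have "d * sqrt (1 - ((p$2 - M0)/d)^2) = sqrt (d^2 * (1 - ((p$2 - M0)/d)^2))"
      using dp by (simp add: real_sqrt_mult)
    also have "d^2 * (1 - ((p$2 - M0)/d)^2) = 2*M0*(p$2) - a^2 - (p$2)^2"
      using dp d by (simp add: d_def field_simps power2_eq_square)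
    finally show ?thesis by (simp add: sq_def)
  qed
  moreover have "(\<lambda>h. h$3 + (h$2 / d) * inverse (sqrt (1 - ((p$2 - M0)/d)^2))) = dF M0 a p"
  proof
    fix h :: "real^4"
    have "(h$2 / d) * inverse (sqrt (1 - ((p$2 - M0)/d)^2)) = h$2 / (d * sqrt (1 - ((p$2 - M0)/d)^2))"
      by (simp add: divide_inverse inverse_mult_distrib mult_ac)
    then show "h$3 + (h$2 / d) * inverse (sqrt (1 - ((p$2 - M0)/d)^2)) = dF M0 a p h"
      unfolding dF_def eq by simp
  qed
  ultimately show ?thesis unfolding Fn_def d_def[symmetric] by simp
qed


lemma second_deriv_test:
  fixes \<phi> \<psi> :: "real \<Rightarrow> real"
  assumes d: "0 < \<delta>" and d1: "\<And>t. \<bar>t\<bar> < \<delta> \<Longrightarrow> (\<phi> has_real_derivative \<psi> t) (at t)"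
    and d2: "(\<psi> has_real_derivative D) (at 0)" and mx: "\<And>t. \<bar>t\<bar> < \<delta> \<Longrightarrow> \<phi> t \<le> \<phi> 0"
  shows "D \<le> 0"
proof (rule ccontr)
  assume "\<not> D \<le> 0" then have Dp: "0 < D" by simp
  have "\<psi> 0 = 0"
    by (rule DERIV_local_max[OF d1[of 0] d]) (use d mx in auto)
  obtain e where e: "0 < e" "\<And>h. 0 < h \<Longrightarrow> h < e \<Longrightarrow> \<psi> 0 < \<psi> (0 + h)"
    using DERIV_pos_inc_right[OF d2 Dp] by blast
  define t0 where "t0 = min e \<delta> / 2"
  have t0: "0 < t0" "t0 < e" "t0 < \<delta>" using e d by (auto simp: t0_def)
  have "(\<phi> has_real_derivative \<psi> x) (at x)" if "0 \<le> x" "x \<le> t0" for x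
    using t0 that by (auto intro!: d1)
  from MVT2[OF t0(1) this] obtain z where z: "0 < z" "z < t0" "\<phi> t0 - \<phi> 0 = (t0 - 0) * \<psi> z"
    by blast
  have "\<psi> z > 0" using e(2)[of z] z t0 \<open>\<psi> 0 = 0\<close> by simp
  then have "\<phi> t0 - \<phi> 0 > 0" using z t0 by simp
  moreover have "\<phi> t0 \<le> \<phi> 0" using mx t0 by simp
  ultimately show False by simp
qed

lemma trace_nonpos:
  fixes h11 h12 h22 H11 H12 H21 H22 :: real
  assumes h: "0 < h11" "0 < h11*h22 - h12^2"
    and q: "\<And>x y. H11*x^2 + (H12+H21)*x*y + H22*y^2 \<le> 0"
  shows "h22*H11 - h12*(H12+H21) + h11*H22 \<le> 0"
proof -
  have A: "H11 \<le> 0" using q[of 1 0] by simp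
  have Q: "H11*h12^2 + (H12+H21)*h12*(-h11) + H22*(-h11)^2 \<le> 0" by (rule q)
  have "h11*(h22*H11 - h12*(H12+H21) + h11*H22) =
        (h11*h22 - h12^2)*H11 + (H11*h12^2 + (H12+H21)*h12*(-h11) + H22*(-h11)^2)"
    by (simp add: algebra_simps power2_eq_square)
  also have "\<dots> \<le> 0"
    using add_nonpos_nonpos[OF mult_nonneg_nonpos[OF less_imp_le[OF h(2)] A] Q] .
  finally show ?thesis using h(1) by (simp add: mult_le_0_iff)
qed

lemma deriv_locconst:
  assumes "(F has_derivative D) (at p)" and "0 < e" and "\<And>y. y \<in> ball p e \<Longrightarrow> F y = F p"
  shows "D = (\<lambda>x. 0)"
proof -
  have "((\<lambda>y. F p) has_derivative (\<lambda>x. 0)) (at p)" by simp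
  then have "(F has_derivative (\<lambda>x. 0)) (at p)"
  proof (rule has_derivative_transform_within_open[where s="ball p e"])
    show "open (ball p e)" by simp
    show "p \<in> ball p e" using assms(2) by simp
    show "F p = F y" if "y \<in> ball p e" for y using assms(3)[OF that] by simp
  qed
  then show ?thesis using assms(1) has_derivative_unique by blast
qed

lemma span_zero4:
  fixes e1 e2 L K t :: "real^4"
  assumes h: "0 < kerr_g M0 a p e1 e1"
      "0 < kerr_g M0 a p e1 e1 * kerr_g M0 a p e2 e2 - (kerr_g M0 a p e1 e2)^2"
    and o: "kerr_g M0 a p L e1 = 0" "kerr_g M0 a p L e2 = 0" "kerr_g M0 a p K e1 = 0" "kerr_g M0 a p K e2 = 0"
    and n: "kerr_g M0 a p L L = 0" "kerr_g M0 a p K K = 0" "kerr_g M0 a p K L = -1"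
    and t: "kerr_g M0 a p t e1 = 0" "kerr_g M0 a p t e2 = 0" "kerr_g M0 a p t L = 0" "kerr_g M0 a p t K = 0"
  shows "t = 0"
proof -
  let ?g = "kerr_g M0 a p"
  have key: "x1 = 0 \<and> x2 = 0 \<and> y = 0 \<and> z = 0"
    if v: "?g v e1 = 0" "?g v e2 = 0" "?g v L = 0" "?g v K = 0"
       and vd: "v = x1 *\<^sub>R e1 + x2 *\<^sub>R e2 + y *\<^sub>R L + z *\<^sub>R K" for v x1 x2 y z
  proof -
    have sy: "?g L K = -1" using n(3) g_sym by metis
    have oL1: "?g e1 L = 0" "?g e2 L = 0" "?g e1 K = 0" "?g e2 K = 0" using o g_sym by metis+
    have s12: "?g e2 e1 = ?g e1 e2" using g_sym by metis
    have E1: "x1 * ?g e1 e1 + x2 * ?g e1 e2 = 0"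
      using v(1) unfolding vd by (simp add: g_lin1 g_lin2 o s12)
    have E2: "x1 * ?g e1 e2 + x2 * ?g e2 e2 = 0"
      using v(2) unfolding vd by (simp add: g_lin1 g_lin2 o s12)
    have E3: "z = 0" using v(3) unfolding vd by (simp add: g_lin1 g_lin2 oL1 n sy)
    have E4: "y = 0" using v(4) unfolding vd by (simp add: g_lin1 g_lin2 oL1 n sy)
    have "x1 * (?g e1 e1 * ?g e2 e2 - (?g e1 e2)^2) = 0"
    proof -
      have "x1 * (?g e1 e1 * ?g e2 e2 - (?g e1 e2)^2) =
         ?g e2 e2 * (x1 * ?g e1 e1 + x2 * ?g e1 e2) - ?g e1 e2 * (x1 * ?g e1 e2 + x2 * ?g e2 e2)"
        by (simp add: algebra_simps power2_eq_square)
      then show ?thesis using E1 E2 by simp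
    qed
    then have x1: "x1 = 0" using h(2) by simp
    then have "x2 * ?g e2 e2 = 0" using E2 by simp
    moreover have "?g e2 e2 \<noteq> 0"
    proof
      assume "?g e2 e2 = 0" then show False using h(2) by simp
    qed
    ultimately show ?thesis using x1 E3 E4 by simp
  qed
  have dist: "e1 \<noteq> e2" "e1 \<noteq> L" "e1 \<noteq> K" "e2 \<noteq> L" "e2 \<noteq> K" "L \<noteq> K"
  proof -
    show "e1 \<noteq> e2" using h(2) by (auto simp: power2_eq_square)
    show "e1 \<noteq> L" using h(1) n(1) by auto
    show "e1 \<noteq> K" using h(1) n(2) by auto
    have "?g e2 e2 \<noteq> 0"
    proof
      assume "?g e2 e2 = 0" then show False using h(2) by simp
    qed
    then show "e2 \<noteq> L" "e2 \<noteq> K" using n by auto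
    show "L \<noteq> K" using n by auto
  qed
  define B where "B = {e1, e2, L, K}"
  have fin: "finite B" by (simp add: B_def)
  have sumB: "(\<Sum>v\<in>B. u v *\<^sub>R v) = u e1 *\<^sub>R e1 + u e2 *\<^sub>R e2 + u L *\<^sub>R L + u K *\<^sub>R K" for u
    unfolding B_def using dist by (simp add: algebra_simps)
  have gsum: "?g (\<Sum>v\<in>B. u v *\<^sub>R v) w = u e1 * ?g e1 w + u e2 * ?g e2 w + u L * ?g L w + u K * ?g K w" for u w
    unfolding sumB by (simp add: g_lin1 g_lin2)
  have ind: "independent B"
  proof
    assume "dependent B"
    then obtain u where u: "\<exists>v\<in>B. u v \<noteq> 0" "(\<Sum>v\<in>B. u v *\<^sub>R v) = 0"
      using dependent_finite[OF fin] by auto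
    have "?g (\<Sum>v\<in>B. u v *\<^sub>R v) w = 0" for w unfolding u(2) by (simp add: g_lin9)
    then have "u e1 = 0 \<and> u e2 = 0 \<and> u L = 0 \<and> u K = 0"
      by (intro key[of "\<Sum>v\<in>B. u v *\<^sub>R v"]) (auto simp: sumB)
    then show False using u(1) unfolding B_def by auto
  qed
  have "card B = 4" unfolding B_def using dist by auto
  then have "card B = DIM(real^4)" by simp
  then have "span B = UNIV" by (metis ind dim_eq_card dim_eq_full)
  then have "t \<in> range (\<lambda>u. \<Sum>v\<in>B. u v *\<^sub>R v)" using span_finite[OF fin] by auto
  then obtain u where tu: "t = (\<Sum>v\<in>B. u v *\<^sub>R v)" by blast
  then have "u e1 = 0 \<and> u e2 = 0 \<and> u L = 0 \<and> u K = 0"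
    using t by (intro key[of t]) (auto simp: sumB)
  then show ?thesis unfolding tu sumB by simp
qed


definition Om :: "real \<Rightarrow> real \<Rightarrow> (real^4) set" where
  "Om M0 a = {p. r_minus M0 a < p$2 \<and> p$2 < r_plus M0 a}"

lemma Om_open: "open (Om M0 a)"
  unfolding Om_def by (intro open_Collect_conj open_Collect_less continuous_intros)

lemma Om_facts: assumes "0 < a" "a < M0" and "p \<in> Om M0 a"
  shows "0 < sq M0 a (p$2)" "0 < kerr_rho2 a p" "\<bar>p$2 - M0\<bar> < sqrt (M0^2 - a^2)"
    "0 < M0^2 - a^2" "0 < p$2"
proof -
  have d: "0 < M0^2 - a^2" using assms(1,2) by (simp add: power_strict_mono)
  show "0 < M0^2 - a^2" by (rule d)
  have dl: "sqrt (M0^2 - a^2) < M0"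
  proof -
    have "M0^2 - a^2 < M0^2" using assms(1) by simp
    then have "sqrt (M0^2 - a^2) < sqrt (M0^2)" by (rule real_sqrt_less_mono)
    then show ?thesis using assms(1,2) by simp
  qed
  have r: "M0 - sqrt (M0^2 - a^2) < p$2" "p$2 < M0 + sqrt (M0^2 - a^2)"
    using assms(3) by (auto simp: Om_def r_minus_def r_plus_def)
  show ab: "\<bar>p$2 - M0\<bar> < sqrt (M0^2 - a^2)" using r by auto
  show rp: "0 < p$2" using r dl by simp
  have "(p$2 - M0)^2 < (sqrt (M0^2 - a^2))^2"
  proof -
    have "\<bar>p$2 - M0\<bar>^2 < (sqrt (M0^2 - a^2))^2"
      by (rule power_strict_mono[OF ab]) auto
    then show ?thesis by simp
  qed
  then have "(p$2 - M0)^2 < M0^2 - a^2" using d by simp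
  then have "0 < 2*M0*(p$2) - a^2 - (p$2)^2" by (simp add: power2_eq_square algebra_simps)
  then show "0 < sq M0 a (p$2)" by (simp add: sq_def)
  show "0 < kerr_rho2 a p" using rp unfolding kerr_rho2_def
    by (simp add: add_pos_nonneg)
qed

lemma dg_addX: assumes "kerr_rho2 a p \<noteq> 0"
  shows "dg M0 a p (X + Y) u w = dg M0 a p X u w + dg M0 a p Y u w"
    and "dg M0 a p (c *\<^sub>R X) u w = c * dg M0 a p X u w"
  unfolding dg_expand[OF assms, where X="X+Y"] dg_expand[OF assms, where X="c *\<^sub>R X"]
    dg_expand[OF assms, where X=X] dg_expand[OF assms, where X=Y]
  by (simp_all add: sum_4 algebra_simps)

lemma dg_flat: assumes "kerr_rho2 a p \<noteq> 0" and "X$2 = 0" "X$3 = 0"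
  shows "dg M0 a p X u w = 0"
  unfolding dg_expand[OF assms(1), where X=X] using assms dg_zero[OF assms(1)] by (simp add: sum_4)

lemma flat_decomp: fixes X :: "real^4" shows "X$2 = 0 \<Longrightarrow> X$3 = 0 \<Longrightarrow> X = X$1 *\<^sub>R axis 1 1 + X$4 *\<^sub>R axis 4 1"
  by (simp add: vec_eq_iff forall_4 axis_def)

lemma Dn_flat: assumes "(nvec M0 a has_derivative D) (at p)" and "X$2 = 0" "X$3 = 0"
  shows "D X = 0"
proof -
  have l: "linear D" using assms(1) has_derivative_linear by blast
  have "D X = D (X$1 *\<^sub>R axis 1 1 + X$4 *\<^sub>R axis 4 1)" using flat_decomp[OF assms(2,3)] by metis
  also have "\<dots> = X$1 *\<^sub>R D (axis 1 1) + X$4 *\<^sub>R D (axis 4 1)"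
    using l by (simp add: linear_add linear_scale)
  also have "\<dots> = 0" using nvec_dzero[OF assms(1)] by simp
  finally show ?thesis .
qed

lemma nn_deriv: assumes "0 < a" "a < M0" "q \<in> Om M0 a"
    and Dn: "(nvec M0 a has_derivative Dn) (at q)"
  shows "dg M0 a q X (nvec M0 a q) (nvec M0 a q) + 2 * kerr_g M0 a q (Dn X) (nvec M0 a q) = 0"
proof -
  note F = Om_facts[OF assms(1,2,3)]
  have Rq: "kerr_rho2 a q \<noteq> 0" using F by simp
  have d: "((\<lambda>p. kerr_g M0 a p (nvec M0 a p) (nvec M0 a p)) has_derivative
     (\<lambda>h. dg M0 a q h (nvec M0 a q) (nvec M0 a q) + kerr_g M0 a q (Dn h) (nvec M0 a q)
          + kerr_g M0 a q (nvec M0 a q) (Dn h))) (at q)"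
    using g_chain[where P="\<lambda>p. p" and x=q and U="nvec M0 a" and W="nvec M0 a" and DP="\<lambda>h. h",
       OF _ has_derivative_ident Dn Dn] Rq by simp
  obtain e where e: "0 < e" "ball q e \<subseteq> Om M0 a" using Om_open assms(3) open_contains_ball by blast
  have "(\<lambda>h. dg M0 a q h (nvec M0 a q) (nvec M0 a q) + kerr_g M0 a q (Dn h) (nvec M0 a q)
          + kerr_g M0 a q (nvec M0 a q) (Dn h)) = (\<lambda>x. 0)"
  proof (rule deriv_locconst[OF d e(1)])
    fix y assume "y \<in> ball q e"
    then have "y \<in> Om M0 a" using e by blast
    note Fy = Om_facts[OF assms(1,2) this]
    show "kerr_g M0 a y (nvec M0 a y) (nvec M0 a y) = kerr_g M0 a q (nvec M0 a q) (nvec M0 a q)"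
      using n_null[OF Fy(1,2)] n_null[OF F(1,2)] by simp
  qed
  then have "dg M0 a q X (nvec M0 a q) (nvec M0 a q) + kerr_g M0 a q (Dn X) (nvec M0 a q)
          + kerr_g M0 a q (nvec M0 a q) (Dn X) = 0" by (rule fun_cong)
  moreover have "kerr_g M0 a q (nvec M0 a q) (Dn X) = kerr_g M0 a q (Dn X) (nvec M0 a q)" by (rule g_sym)
  ultimately show ?thesis by simp
qed

lemma nY_deriv: assumes "0 < a" "a < M0" "q \<in> Om M0 a"
    and Dn: "(nvec M0 a has_derivative Dn) (at q)" and Y: "Y$2 = 0" "Y$3 = 0"
  shows "dg M0 a q X (nvec M0 a q) Y + kerr_g M0 a q (Dn X) Y = 0"
proof -
  note F = Om_facts[OF assms(1,2,3)]
  have Rq: "kerr_rho2 a q \<noteq> 0" using F by simp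
  have d: "((\<lambda>p. kerr_g M0 a p (nvec M0 a p) Y) has_derivative
     (\<lambda>h. dg M0 a q h (nvec M0 a q) Y + kerr_g M0 a q (Dn h) Y
          + kerr_g M0 a q (nvec M0 a q) ((\<lambda>h. 0) h))) (at q)"
    using g_chain[where P="\<lambda>p. p" and x=q and U="nvec M0 a" and W="\<lambda>p. Y" and DP="\<lambda>h. h"
       and DW="\<lambda>h. 0", OF _ has_derivative_ident Dn has_derivative_const] Rq by simp
  obtain e where e: "0 < e" "ball q e \<subseteq> Om M0 a" using Om_open assms(3) open_contains_ball by blast
  have "(\<lambda>h. dg M0 a q h (nvec M0 a q) Y + kerr_g M0 a q (Dn h) Y
          + kerr_g M0 a q (nvec M0 a q) ((\<lambda>h. 0) h)) = (\<lambda>x. 0)"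
  proof (rule deriv_locconst[OF d e(1)])
    fix y assume "y \<in> ball q e"
    then have "y \<in> Om M0 a" using e by blast
    note Fy = Om_facts[OF assms(1,2) this]
    show "kerr_g M0 a y (nvec M0 a y) Y = kerr_g M0 a q (nvec M0 a q) Y"
      using n_g[OF Fy(1,2)] n_g[OF F(1,2)] Y by (simp add: dF_def)
  qed
  from fun_cong[OF this, of X] show ?thesis by (simp add: g_lin10)
qed


lemma g_flat: fixes u w :: "real^4"
  assumes "u$2 = 0" "u$3 = 0" "w$2 = 0" "w$3 = 0"
  shows "kerr_g M0 a p u w = u$1 * w$1 * kerr_comp M0 a p 1 1
     + (u$1 * w$4 + u$4 * w$1) * kerr_comp M0 a p 1 4 + u$4 * w$4 * kerr_comp M0 a p 4 4"
  unfolding gexp using assms comp_sym[of M0 a p 4 1] by (simp add: sum_4 algebra_simps)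

lemma dg_flat2: fixes u w :: "real^4"
  assumes "u$2 = 0" "u$3 = 0" "w$2 = 0" "w$3 = 0"
  shows "dg M0 a p X u w = u$1 * w$1 * dcomp M0 a p X 1 1
     + (u$1 * w$4 + u$4 * w$1) * dcomp M0 a p X 1 4 + u$4 * w$4 * dcomp M0 a p X 4 4"
  unfolding dg_def using assms dcomp_sym[of M0 a p X 4 1] by (simp add: sum_4 algebra_simps)

lemma T_identity:
  fixes x1 y1 x2 y2 G11 G14 G44 D11 D14 D44 :: real
  shows "(x2*x2*G11 + (x2*y2 + y2*x2)*G14 + y2*y2*G44) * ((x1*x1*D11 + (x1*y1 + y1*x1)*D14 + y1*y1*D44)/2)
     - (x1*x2*G11 + (x1*y2 + y1*x2)*G14 + y1*y2*G44) *
       ((x1*x2*D11 + (x1*y2 + y1*x2)*D14 + y1*y2*D44)/2 + (x2*x1*D11 + (x2*y1 + y2*x1)*D14 + y2*y1*D44)/2)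
     + (x1*x1*G11 + (x1*y1 + y1*x1)*G14 + y1*y1*G44) * ((x2*x2*D11 + (x2*y2 + y2*x2)*D14 + y2*y2*D44)/2)
   = (x1*y2 - x2*y1)^2 * (G44*D11 - 2*G14*D14 + G11*D44) / 2"
  by (simp add: field_simps power2_eq_square)

lemma det_identity:
  fixes x1 y1 x2 y2 G11 G14 G44 :: real
  shows "(x1*x1*G11 + (x1*y1 + y1*x1)*G14 + y1*y1*G44) * (x2*x2*G11 + (x2*y2 + y2*x2)*G14 + y2*y2*G44)
     - (x1*x2*G11 + (x1*y2 + y1*x2)*G14 + y1*y2*G44)^2
   = (x1*y2 - x2*y1)^2 * (G11*G44 - G14^2)"
  by (simp add: algebra_simps power2_eq_square)

lemma detG_deriv: assumes a: "0 < a" "a < M0" and qO: "q \<in> Om M0 a"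
  shows "dcomp M0 a q X 1 1 * kerr_comp M0 a q 4 4 + kerr_comp M0 a q 1 1 * dcomp M0 a q X 4 4
     - 2 * kerr_comp M0 a q 1 4 * dcomp M0 a q X 1 4
   = (2*M0 - 2*q$2) * X$2 * (sin (q$3))^2 + (2*M0*q$2 - a^2 - (q$2)^2) * (2 * sin (q$3) * cos (q$3) * X$3)"
proof -
  note F = Om_facts[OF a qO]
  have Rq: "kerr_rho2 a q \<noteq> 0" using F by simp
  note c = comp_hasd[OF Rq, of M0]
  have d1: "((\<lambda>p. kerr_comp M0 a p 1 1 * kerr_comp M0 a p 4 4 - (kerr_comp M0 a p 1 4)^2) has_derivative
     (\<lambda>h. (kerr_comp M0 a q 1 1 * dcomp M0 a q h 4 4 + dcomp M0 a q h 1 1 * kerr_comp M0 a q 4 4)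
        - of_nat 2 * dcomp M0 a q h 1 4 * kerr_comp M0 a q 1 4 ^ (2 - 1))) (at q)"
    by (intro has_derivative_diff has_derivative_mult has_derivative_power c)
  have d2: "((\<lambda>p. (2*M0*p$2 - a^2 - (p$2)^2) * (sin (p$3))^2) has_derivative
     (\<lambda>h. (2*M0*q$2 - a^2 - (q$2)^2) * (2 * sin (q$3) * cos (q$3) * h$3) + (2*M0 - 2*q$2) * h$2 * (sin (q$3))^2)) (at q)"
    by (auto intro!: derivative_eq_intros simp: algebra_simps power2_eq_square)
  obtain e where e: "0 < e" "ball q e \<subseteq> Om M0 a" using Om_open qO open_contains_ball by blast
  have "((\<lambda>p. (2*M0*p$2 - a^2 - (p$2)^2) * (sin (p$3))^2) has_derivative
     (\<lambda>h. (kerr_comp M0 a q 1 1 * dcomp M0 a q h 4 4 + dcomp M0 a q h 1 1 * kerr_comp M0 a q 4 4)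
        - of_nat 2 * dcomp M0 a q h 1 4 * kerr_comp M0 a q 1 4 ^ (2 - 1))) (at q)"
  proof (rule has_derivative_transform_within_open[OF d1, where s="ball q e"])
    show "open (ball q e)" by simp
    show "q \<in> ball q e" using e by simp
    fix y assume "y \<in> ball q e"
    then have "y \<in> Om M0 a" using e by blast
    then have "kerr_rho2 a y \<noteq> 0" using Om_facts[OF a] by fastforce
    then show "kerr_comp M0 a y 1 1 * kerr_comp M0 a y 4 4 - (kerr_comp M0 a y 1 4)^2
        = (2*M0*y$2 - a^2 - (y$2)^2) * (sin (y$3))^2" by (rule detG)
  qed
  from has_derivative_unique[OF this d2]
  have "(kerr_comp M0 a q 1 1 * dcomp M0 a q X 4 4 + dcomp M0 a q X 1 1 * kerr_comp M0 a q 4 4)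
        - of_nat 2 * dcomp M0 a q X 1 4 * kerr_comp M0 a q 1 4 ^ (2 - 1)
     = (2*M0*q$2 - a^2 - (q$2)^2) * (2 * sin (q$3) * cos (q$3) * X$3) + (2*M0 - 2*q$2) * X$2 * (sin (q$3))^2"
    by meson
  then show ?thesis by (simp add: algebra_simps)
qed

lemma ortho_deriv:
  fixes f :: "real \<times> real \<Rightarrow> real^4"
  assumes U: "open U" "u0 \<in> U" and fd: "\<And>u. u \<in> U \<Longrightarrow> (f has_derivative fd u) (at u)"
    and E: "\<And>u. u \<in> U \<Longrightarrow> ((\<lambda>x. fd x w) has_derivative E u) (at u)"
    and Md: "\<And>u. u \<in> U \<Longrightarrow> ((M \<circ> f) has_derivative Md u) (at u)"
    and z: "\<And>u. u \<in> U \<Longrightarrow> kerr_g M0 a (f u) (M (f u)) (fd u w) = 0"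
    and R: "kerr_rho2 a (f u0) \<noteq> 0"
  shows "dg M0 a (f u0) (fd u0 v) (M (f u0)) (fd u0 w) + kerr_g M0 a (f u0) (Md u0 v) (fd u0 w)
      + kerr_g M0 a (f u0) (M (f u0)) (E u0 v) = 0"
proof -
  have Md': "((\<lambda>u. M (f u)) has_derivative Md u0) (at u0)" using Md[OF U(2)] by (simp add: o_def)
  have d: "((\<lambda>u. kerr_g M0 a (f u) (M (f u)) (fd u w)) has_derivative
     (\<lambda>h. dg M0 a (f u0) (fd u0 h) (M (f u0)) (fd u0 w) + kerr_g M0 a (f u0) (Md u0 h) (fd u0 w)
        + kerr_g M0 a (f u0) (M (f u0)) (E u0 h))) (at u0)"
    by (rule g_chain[OF R fd[OF U(2)] Md' E[OF U(2)]])
  obtain e where e: "0 < e" "ball u0 e \<subseteq> U" using U open_contains_ball by blast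
  have "(\<lambda>h. dg M0 a (f u0) (fd u0 h) (M (f u0)) (fd u0 w) + kerr_g M0 a (f u0) (Md u0 h) (fd u0 w)
        + kerr_g M0 a (f u0) (M (f u0)) (E u0 h)) = (\<lambda>x. 0)"
    by (rule deriv_locconst[OF d e(1)]) (use e z U(2) in auto)
  then show ?thesis by (rule fun_cong)
qed


lemma dF_lin: "dF M0 a p (c *\<^sub>R X) = c * dF M0 a p X"
  by (simp add: dF_def algebra_simps)

lemma quad_nonpos:
  fixes f :: "real \<times> real \<Rightarrow> real^4"
  assumes a: "0 < a" "a < M0" and U: "open U" "u0 \<in> U"
    and fd: "\<And>u. u \<in> U \<Longrightarrow> (f has_derivative fd u) (at u)"
    and E: "\<And>u. u \<in> U \<Longrightarrow> ((\<lambda>x. fd x w) has_derivative E u) (at u)"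
    and inOm: "\<And>u. u \<in> U \<Longrightarrow> f u \<in> Om M0 a"
    and mx: "\<And>u. u \<in> U \<Longrightarrow> Fn M0 a (f u) \<le> Fn M0 a (f u0)"
    and Dn: "(nvec M0 a has_derivative Dn) (at (f u0))"
  shows "dg M0 a (f u0) (fd u0 w) (nvec M0 a (f u0)) (fd u0 w)
     + kerr_g M0 a (f u0) (Dn (fd u0 w)) (fd u0 w)
     + kerr_g M0 a (f u0) (nvec M0 a (f u0)) (E u0 w) \<le> 0"
proof -
  define \<Psi> where "\<Psi> = (\<lambda>u. kerr_g M0 a (f u) (nvec M0 a (f u)) (fd u w))"
  define D\<Psi> where "D\<Psi> = (\<lambda>h. dg M0 a (f u0) (fd u0 h) (nvec M0 a (f u0)) (fd u0 w)
     + kerr_g M0 a (f u0) (Dn (fd u0 h)) (fd u0 w) + kerr_g M0 a (f u0) (nvec M0 a (f u0)) (E u0 h))"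
  have R0: "kerr_rho2 a (f u0) \<noteq> 0" using Om_facts[OF a inOm[OF U(2)]] by simp
  have nf: "((\<lambda>u. nvec M0 a (f u)) has_derivative (\<lambda>h. Dn (fd u0 h))) (at u0)"
    by (rule has_derivative_compose[OF fd[OF U(2)] Dn])
  have dPsi: "(\<Psi> has_derivative D\<Psi>) (at u0)"
    unfolding \<Psi>_def D\<Psi>_def by (rule g_chain[OF R0 fd[OF U(2)] nf E[OF U(2)]])
  have linPsi: "linear D\<Psi>" using dPsi has_derivative_linear by blast
  obtain e where e: "0 < e" "ball u0 e \<subseteq> U" using U open_contains_ball by blast
  define \<delta> where "\<delta> = e / (norm w + 1)"
  have np: "0 < norm w + 1" by (simp add: add_nonneg_pos)
  have dp: "0 < \<delta>" using e np by (simp add: \<delta>_def)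
  have inU: "u0 + t *\<^sub>R w \<in> U" if "\<bar>t\<bar> < \<delta>" for t
  proof -
    have "norm (t *\<^sub>R w) = \<bar>t\<bar> * norm w" by simp
    also have "\<dots> \<le> \<bar>t\<bar> * (norm w + 1)" by (simp add: mult_left_mono)
    also have "\<dots> < \<delta> * (norm w + 1)" using that
      by (intro mult_strict_right_mono) (use np in auto)
    also have "\<dots> = e" unfolding \<delta>_def using np by simp
    finally have "dist u0 (u0 + t *\<^sub>R w) < e" by (simp add: dist_norm)
    then show ?thesis using e by auto
  qed
  have g: "((\<lambda>t. u0 + t *\<^sub>R w) has_derivative (\<lambda>h. h *\<^sub>R w)) (at t)" for t
    by (auto intro!: derivative_eq_intros)
  have d1: "((\<lambda>t. Fn M0 a (f (u0 + t *\<^sub>R w))) has_real_derivative \<Psi> (u0 + t *\<^sub>R w)) (at t)"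
    if t: "\<bar>t\<bar> < \<delta>" for t
  proof -
    let ?u = "u0 + t *\<^sub>R w"
    have uU: "?u \<in> U" by (rule inU[OF t])
    note Fu = Om_facts[OF a inOm[OF uU]]
    have c1: "((\<lambda>t. f (u0 + t *\<^sub>R w)) has_derivative (\<lambda>h. fd ?u (h *\<^sub>R w))) (at t)"
      using has_derivative_compose[OF g fd[OF uU]] .
    have c2: "((\<lambda>t. Fn M0 a (f (u0 + t *\<^sub>R w))) has_derivative (\<lambda>h. dF M0 a (f ?u) (fd ?u (h *\<^sub>R w)))) (at t)"
      using has_derivative_compose[OF c1 Fn_deriv[OF Fu(4,3)]] .
    have lfd: "linear (fd ?u)" using fd[OF uU] has_derivative_linear by blast
    have "(\<lambda>h. dF M0 a (f ?u) (fd ?u (h *\<^sub>R w))) = (\<lambda>h. \<Psi> ?u * h)"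
    proof
      fix h :: real
      have "dF M0 a (f ?u) (fd ?u (h *\<^sub>R w)) = h * dF M0 a (f ?u) (fd ?u w)"
        using linear_scale[OF lfd] dF_lin by simp
      also have "dF M0 a (f ?u) (fd ?u w) = \<Psi> ?u" unfolding \<Psi>_def using n_g[OF Fu(1,2)] by simp
      finally show "dF M0 a (f ?u) (fd ?u (h *\<^sub>R w)) = \<Psi> ?u * h" by simp
    qed
    then show ?thesis using c2 unfolding has_field_derivative_def by simp
  qed
  have d2: "((\<lambda>t. \<Psi> (u0 + t *\<^sub>R w)) has_real_derivative D\<Psi> w) (at 0)"
  proof -
    have "(\<Psi> has_derivative D\<Psi>) (at ((\<lambda>t. u0 + t *\<^sub>R w) 0))" using dPsi by simp
    from has_derivative_compose[OF g this]
    have "((\<lambda>t. \<Psi> (u0 + t *\<^sub>R w)) has_derivative (\<lambda>h. D\<Psi> (h *\<^sub>R w))) (at 0)" .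
    moreover have "(\<lambda>h. D\<Psi> (h *\<^sub>R w)) = (\<lambda>h. D\<Psi> w * h)"
      using linear_scale[OF linPsi] by (auto simp: mult.commute)
    ultimately show ?thesis unfolding has_field_derivative_def by simp
  qed
  have "D\<Psi> w \<le> 0"
  proof (rule second_deriv_test[OF dp d1 d2])
    fix t :: real assume "\<bar>t\<bar> < \<delta>"
    then show "Fn M0 a (f (u0 + t *\<^sub>R w)) \<le> Fn M0 a (f (u0 + 0 *\<^sub>R w))"
      using mx[OF inU] by simp
  qed
  then show ?thesis unfolding D\<Psi>_def .
qed


lemma regionX_Om: "region_X M0 a \<subseteq> Om M0 a"
  unfolding region_X_def Om_def by auto

lemma shift_mem:
  assumes per: "\<forall>p. p \<in> S \<longleftrightarrow> phi_shift p \<in> S" and pS: "p \<in> S"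
  shows "p + (2*pi*real_of_int m) *\<^sub>R axis 4 1 \<in> S"
proof -
  have plus: "p + (2*pi*real n) *\<^sub>R axis 4 1 \<in> S" for n
  proof (induction n)
    case 0 then show ?case using pS by simp
  next
    case (Suc n)
    have e: "2*pi*real (Suc n) = 2*pi*real n + 2*pi" by (simp add: distrib_left)
    have "p + (2*pi*real (Suc n)) *\<^sub>R axis 4 1 = phi_shift (p + (2*pi*real n) *\<^sub>R axis 4 1)"
      unfolding e phi_shift_def scaleR_add_left by (simp add: add.assoc)
    then show ?case using per Suc by simp
  qed
  have minus: "p - (2*pi*real n) *\<^sub>R axis 4 1 \<in> S" for n
  proof (induction n)
    case 0 then show ?case using pS by simp
  next
    case (Suc n)
    have e: "2*pi*real (Suc n) = 2*pi*real n + 2*pi" by (simp add: distrib_left)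
    have "phi_shift (p - (2*pi*real (Suc n)) *\<^sub>R axis 4 1) = p - (2*pi*real n) *\<^sub>R axis 4 1"
      unfolding e phi_shift_def scaleR_add_left by (simp add: diff_add_eq)
    then have "phi_shift (p - (2*pi*real (Suc n)) *\<^sub>R axis 4 1) \<in> S" using Suc by simp
    then show ?case using per by blast
  qed
  show ?thesis
  proof (cases "m \<ge> 0")
    case True
    then have "real (nat m) = real_of_int m" by simp
    with plus[of "nat m"] show ?thesis by simp
  next
    case False
    then have "real (nat (-m)) = - real_of_int m" by simp
    with minus[of "nat (-m)"] show ?thesis by (simp add: minus_diff_eq)
  qed
qed

lemma shift_into:
  assumes per: "\<forall>p. p \<in> S \<longleftrightarrow> phi_shift p \<in> S" and pS: "p \<in> S"
  shows "\<exists>p'\<in>S. p'$2 = p$2 \<and> p'$3 = p$3 \<and> 0 \<le> p'$4 \<and> p'$4 \<le> 2*pi"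
proof -
  define m where "m = \<lfloor>p$4 / (2*pi)\<rfloor>"
  define p' where "p' = p + (2*pi*real_of_int (-m)) *\<^sub>R axis 4 (1::real)"
  have "p' \<in> S" unfolding p'_def by (rule shift_mem[OF per pS])
  moreover have "p'$4 = p$4 - 2*pi*m" by (simp add: p'_def axis_def)
  moreover have "real_of_int m \<le> p$4 / (2*pi)" "p$4 / (2*pi) < real_of_int m + 1"
    unfolding m_def by linarith+
  then have "2*pi*m \<le> p$4" "p$4 < 2*pi*m + 2*pi"
    by (simp_all add: field_simps)
  ultimately show ?thesis by (intro bexI[of _ p']) (auto simp: p'_def axis_def)
qed

lemma Fn_local: "x$2 = y$2 \<Longrightarrow> x$3 = y$3 \<Longrightarrow> Fn M0 a x = Fn M0 a y"
  by (simp add: Fn_def)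

lemma max_point:
  assumes a: "0 < a" "a < M0" and SX: "S \<subseteq> region_X M0 a" and cs: "closed_surface M0 a S"
  shows "\<exists>q\<in>S. \<forall>p\<in>S. Fn M0 a p \<le> Fn M0 a q"
proof -
  define K where "K = S \<inter> {p. 0 \<le> p$4 \<and> p$4 \<le> 2*pi}"
  have per: "\<forall>p. p \<in> S \<longleftrightarrow> phi_shift p \<in> S" and Sne: "S \<noteq> {}" and cK: "compact K"
    using cs unfolding closed_surface_def K_def by auto
  obtain p0 where "p0 \<in> S" using Sne by blast
  then have Kne: "K \<noteq> {}" using shift_into[OF per] unfolding K_def by fastforce
  have cont: "continuous_on K (Fn M0 a)"
  proof (rule continuous_at_imp_continuous_on, rule ballI)
    fix p assume "p \<in> K"
    then have "p \<in> Om M0 a" using SX regionX_Om unfolding K_def by blast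
    note F = Om_facts[OF a this]
    show "isCont (Fn M0 a) p"
      using has_derivative_continuous[OF Fn_deriv[OF F(4,3)]] .
  qed
  obtain q where qK: "q \<in> K" and qm: "\<forall>y\<in>K. Fn M0 a y \<le> Fn M0 a q"
    using continuous_attains_sup[OF cK Kne cont] by blast
  have "Fn M0 a p \<le> Fn M0 a q" if pS: "p \<in> S" for p
  proof -
    obtain p' where "p' \<in> S" "p'$2 = p$2" "p'$3 = p$3" "0 \<le> p'$4" "p'$4 \<le> 2*pi"
      using shift_into[OF per pS] by blast
    then have pK: "p' \<in> K" and "Fn M0 a p' = Fn M0 a p" unfolding K_def
      by (auto intro!: Fn_local)
    moreover have "Fn M0 a p' \<le> Fn M0 a q" using qm pK by blast
    ultimately show ?thesis by simp
  qed
  then show ?thesis using qK unfolding K_def by blast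
qed


lemma H_decomp:
  assumes R: "kerr_rho2 a q \<noteq> 0"
    and ol: "dg M0 a q X L Y + kerr_g M0 a q dl Y + kerr_g M0 a q L F = 0"
    and ok: "dg M0 a q X K Y + kerr_g M0 a q dk Y + kerr_g M0 a q K F = 0"
    and nd: "n = \<alpha> *\<^sub>R L + \<beta> *\<^sub>R K"
  shows "dg M0 a q X n Y + kerr_g M0 a q DnX Y + kerr_g M0 a q n F =
     - \<alpha> * kerr_B M0 a q X Y dl L - \<beta> * kerr_B M0 a q X Y dk K
     + (dg M0 a q X n Y / 2 - dg M0 a q Y X n / 2 + dg M0 a q n X Y / 2 + kerr_g M0 a q DnX Y)"
proof -
  have s1: "kerr_g M0 a q Y dl = kerr_g M0 a q dl Y" "kerr_g M0 a q Y dk = kerr_g M0 a q dk Y" using g_sym by metis+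
  have s2: "dg M0 a q X Y L = dg M0 a q X L Y" "dg M0 a q X Y K = dg M0 a q X K Y"
    "dg M0 a q L Y X = dg M0 a q L X Y" "dg M0 a q K Y X = dg M0 a q K X Y" using dg_sym by metis+
  have E: "(dg M0 a q X n Y + kerr_g M0 a q DnX Y + kerr_g M0 a q n F) -
     (- \<alpha> * kerr_B M0 a q X Y dl L - \<beta> * kerr_B M0 a q X Y dk K
     + (dg M0 a q X n Y / 2 - dg M0 a q Y X n / 2 + dg M0 a q n X Y / 2 + kerr_g M0 a q DnX Y))
     = \<alpha> * (dg M0 a q X L Y + kerr_g M0 a q dl Y + kerr_g M0 a q L F)
     + \<beta> * (dg M0 a q X K Y + kerr_g M0 a q dk Y + kerr_g M0 a q K F)"
    unfolding B_eq[OF R] nd dg_addX[OF R] dg_lin1 dg_lin2 dg_lin3 dg_lin4 g_lin1 g_lin2 s1 s2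
    by (simp add: field_simps)
  show ?thesis using E ol ok by simp
qed

lemma Q_flat:
  assumes R: "kerr_rho2 a q \<noteq> 0" and lD: "linear Dn"
    and p1: "P$2 = 0" "P$3 = 0" and p2: "P'$2 = 0" "P'$3 = 0"
    and nn: "\<And>Z. dg M0 a q Z n n + 2 * kerr_g M0 a q (Dn Z) n = 0"
    and nY: "\<And>Z Y. Y$2 = 0 \<Longrightarrow> Y$3 = 0 \<Longrightarrow> dg M0 a q Z n Y + kerr_g M0 a q (Dn Z) Y = 0"
    and Dz: "\<And>Y. Y$2 = 0 \<Longrightarrow> Y$3 = 0 \<Longrightarrow> Dn Y = 0"
    and X: "X = P + c *\<^sub>R n" and Y: "Y = P' + c' *\<^sub>R n"
  shows "dg M0 a q X n Y / 2 - dg M0 a q Y X n / 2 + dg M0 a q n X Y / 2 + kerr_g M0 a q (Dn X) Y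
       = dg M0 a q n P P' / 2"
proof -
  have z1: "dg M0 a q P u w = 0" "dg M0 a q P' u w = 0" for u w using dg_flat[OF R] p1 p2 by auto
  have z2: "Dn P = 0" "Dn P' = 0" using Dz p1 p2 by auto
  have DX: "Dn X = c *\<^sub>R Dn n" unfolding X using lD z2 by (simp add: linear_add linear_scale)
  have a1: "dg M0 a q n n P' + kerr_g M0 a q (Dn n) P' = 0" using nY p2 by blast
  have a2: "dg M0 a q n n n + 2 * kerr_g M0 a q (Dn n) n = 0" using nn by blast
  have s: "dg M0 a q n P n = dg M0 a q n n P" "dg M0 a q n n P' = dg M0 a q n P' n" using dg_sym by metis+
  have E: "dg M0 a q X n Y / 2 - dg M0 a q Y X n / 2 + dg M0 a q n X Y / 2 + kerr_g M0 a q (Dn X) Y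
       - dg M0 a q n P P' / 2 = c * (dg M0 a q n n P' + kerr_g M0 a q (Dn n) P')
         + (c*c'/2) * (dg M0 a q n n n + 2 * kerr_g M0 a q (Dn n) n)"
    unfolding DX unfolding X Y dg_addX[OF R] dg_lin1 dg_lin2 dg_lin3 dg_lin4 g_lin1 g_lin2 g_lin3 g_lin4 z1 s
    by (simp add: field_simps)
  show ?thesis using E a1 a2 by simp
qed

lemma h_flat:
  assumes s: "0 < sq M0 a (q$2)" and R: "0 < kerr_rho2 a q"
    and p1: "P$2 = 0" "P$3 = 0" and p2: "P'$2 = 0" "P'$3 = 0"
    and X: "X = P + c *\<^sub>R nvec M0 a q" and Y: "Y = P' + c' *\<^sub>R nvec M0 a q"
  shows "kerr_g M0 a q X Y = kerr_g M0 a q P P'"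
proof -
  have a: "kerr_g M0 a q (nvec M0 a q) P = 0" "kerr_g M0 a q (nvec M0 a q) P' = 0"
    using n_g[OF s R] p1 p2 by (simp_all add: dF_def)
  have b: "kerr_g M0 a q P (nvec M0 a q) = 0" using a g_sym by metis
  show ?thesis unfolding X Y g_lin1 g_lin2 g_lin3 g_lin4 a b n_null[OF s R] by simp
qed


definition Tr :: "real \<Rightarrow> real \<Rightarrow> real \<Rightarrow> real \<Rightarrow> real \<Rightarrow> real \<Rightarrow> real \<Rightarrow> real" where
  "Tr h11 h12 h22 B11 B12 B21 B22 = h22*B11 - h12*(B12+B21) + h11*B22"

lemma P0_pos: assumes a: "0 < a" "a < M0" and qX: "q \<in> region_X M0 a"
  shows "0 < (2*M0 - 2*q$2) * (nvec M0 a q)$2 * (sin (q$3))^2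
           + (2*M0*q$2 - a^2 - (q$2)^2) * (2 * sin (q$3) * cos (q$3) * (nvec M0 a q)$3)"
proof -
  have qO: "q \<in> Om M0 a" using qX regionX_Om by blast
  note F = Om_facts[OF a qO]
  define s where "s = sq M0 a (q$2)"
  define R where "R = kerr_rho2 a q"
  define r where "r = q$2"
  define sn where "sn = sin (q$3)"
  define cs where "cs = cos (q$3)"
  have sp: "0 < s" and Rp: "0 < R" using F unfolding s_def R_def by auto
  have th: "0 < q$3" "q$3 < pi" using qX unfolding region_X_def by auto
  have snp: "0 < sn" unfolding sn_def using sin_gt_zero[OF th] .
  have cotc: "(M0 - r) / s < cs / sn"
    using qX unfolding region_X_def s_def sq_def r_def cs_def sn_def cot_def by auto
  have "(M0 - r) / s * (s* sn) < cs / sn * (s* sn)"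
    by (rule mult_strict_right_mono[OF cotc]) (use sp snp in simp)
  moreover have "(M0 - r) / s * (s* sn) = (M0 - r) * sn" using sp by simp
  moreover have "cs / sn * (s* sn) = s * cs" using snp by simp
  ultimately have key: "0 < s*cs - (M0 - r)* sn" by simp
  have s2: "s^2 = 2*M0*r - a^2 - r^2" unfolding s_def r_def by (rule sq_sq[OF s2_of[OF F(1)]])
  have "(2*M0 - 2*q$2) * (nvec M0 a q)$2 * (sin (q$3))^2
           + (2*M0*q$2 - a^2 - (q$2)^2) * (2 * sin (q$3) * cos (q$3) * (nvec M0 a q)$3)
       = (2*M0 - 2*r) * (-s/R) * sn^2 + s^2 * (2 * sn * cs * (1/R))"
    unfolding nvec_comp s2 by (simp add: s_def R_def r_def sn_def cs_def)
  also have "\<dots> = (2* s* sn/R) * (s*cs - (M0 - r)* sn)"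
    using Rp by (simp add: field_simps power2_eq_square)
  also have "\<dots> > 0" using sp snp Rp key by simp
  finally show ?thesis .
qed

lemma chart_contra:
  fixes f :: "real \<times> real \<Rightarrow> real^4" and l k :: "real^4 \<Rightarrow> real^4"
  assumes a: "0 < a" "a < M0"
    and U: "open U" "u0 \<in> U"
    and fd: "\<And>u. u \<in> U \<Longrightarrow> (f has_derivative fd u) (at u)"
    and fdd: "\<And>v u. u \<in> U \<Longrightarrow> ((\<lambda>x. fd x v) has_derivative fdd v u) (at u)"
    and fOm: "\<And>u. u \<in> U \<Longrightarrow> f u \<in> Om M0 a"
    and fX: "f u0 \<in> region_X M0 a"
    and fmax: "\<And>u. u \<in> U \<Longrightarrow> Fn M0 a (f u) \<le> Fn M0 a (f u0)"
    and Ld: "\<And>u. u \<in> U \<Longrightarrow> ((l \<circ> f) has_derivative Ld u) (at u)"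
    and Kd: "\<And>u. u \<in> U \<Longrightarrow> ((k \<circ> f) has_derivative Kd u) (at u)"
    and ol: "\<And>u w. u \<in> U \<Longrightarrow> kerr_g M0 a (f u) (l (f u)) (fd u w) = 0"
    and ok: "\<And>u w. u \<in> U \<Longrightarrow> kerr_g M0 a (f u) (k (f u)) (fd u w) = 0"
    and fl: "future_null M0 a (f u0) (l (f u0))" and fk: "future_null M0 a (f u0) (k (f u0))"
    and kl: "kerr_g M0 a (f u0) (k (f u0)) (l (f u0)) = -1"
    and h1: "0 < kerr_g M0 a (f u0) (fd u0 (1,0)) (fd u0 (1,0))"
    and h2: "0 < kerr_g M0 a (f u0) (fd u0 (1,0)) (fd u0 (1,0)) * kerr_g M0 a (f u0) (fd u0 (0,1)) (fd u0 (0,1))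
              - (kerr_g M0 a (f u0) (fd u0 (1,0)) (fd u0 (0,1)))^2"
    and exl: "Tr (kerr_g M0 a (f u0) (fd u0 (1,0)) (fd u0 (1,0))) (kerr_g M0 a (f u0) (fd u0 (1,0)) (fd u0 (0,1)))
         (kerr_g M0 a (f u0) (fd u0 (0,1)) (fd u0 (0,1)))
         (kerr_B M0 a (f u0) (fd u0 (1,0)) (fd u0 (1,0)) (Ld u0 (1,0)) (l (f u0)))
         (kerr_B M0 a (f u0) (fd u0 (1,0)) (fd u0 (0,1)) (Ld u0 (1,0)) (l (f u0)))
         (kerr_B M0 a (f u0) (fd u0 (0,1)) (fd u0 (1,0)) (Ld u0 (0,1)) (l (f u0)))
         (kerr_B M0 a (f u0) (fd u0 (0,1)) (fd u0 (0,1)) (Ld u0 (0,1)) (l (f u0))) \<le> 0"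
    and exk: "Tr (kerr_g M0 a (f u0) (fd u0 (1,0)) (fd u0 (1,0))) (kerr_g M0 a (f u0) (fd u0 (1,0)) (fd u0 (0,1)))
         (kerr_g M0 a (f u0) (fd u0 (0,1)) (fd u0 (0,1)))
         (kerr_B M0 a (f u0) (fd u0 (1,0)) (fd u0 (1,0)) (Kd u0 (1,0)) (k (f u0)))
         (kerr_B M0 a (f u0) (fd u0 (1,0)) (fd u0 (0,1)) (Kd u0 (1,0)) (k (f u0)))
         (kerr_B M0 a (f u0) (fd u0 (0,1)) (fd u0 (1,0)) (Kd u0 (0,1)) (k (f u0)))
         (kerr_B M0 a (f u0) (fd u0 (0,1)) (fd u0 (0,1)) (Kd u0 (0,1)) (k (f u0))) \<le> 0"
  shows False
proof -
  define q where "q = f u0"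
  define b1 :: "real \<times> real" where "b1 = (1,0)"
  define b2 :: "real \<times> real" where "b2 = (0,1)"
  define e1 where "e1 = fd u0 b1"
  define e2 where "e2 = fd u0 b2"
  define n where "n = nvec M0 a q"
  define L where "L = l q"
  define K where "K = k q"
  define G where "G = kerr_g M0 a q"
  have qO: "q \<in> Om M0 a" unfolding q_def using fOm[OF U(2)] .
  note F = Om_facts[OF a qO]
  have Rq: "kerr_rho2 a q \<noteq> 0" using F by simp
  obtain Dn where Dn: "(nvec M0 a has_derivative Dn) (at q)" using nvec_diff[OF F(1,2)] by blast
  have lDn: "linear Dn" using Dn has_derivative_linear by blast
  have lfd: "linear (fd u0)" using fd[OF U(2)] has_derivative_linear by blast
  have fo: "dF M0 a q (fd u0 h) = 0" for h
  proof -
    have d: "((\<lambda>u. Fn M0 a (f u)) has_derivative (\<lambda>h. dF M0 a q (fd u0 h))) (at u0)"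
    proof -
      have "(Fn M0 a has_derivative dF M0 a q) (at (f u0))" using Fn_deriv[OF F(4,3)] by (simp add: q_def)
      from has_derivative_compose[OF fd[OF U(2)] this] show ?thesis .
    qed
    have "eventually (\<lambda>y. y \<in> U) (at u0)" by (rule eventually_at_in_open'[OF U])
    then have "eventually (\<lambda>y. Fn M0 a (f y) \<le> Fn M0 a (f u0)) (at u0)"
      by (rule eventually_mono) (rule fmax)
    from has_derivative_local_max[OF d this] show ?thesis by meson
  qed
  have fo1: "dF M0 a q e1 = 0" and fo2: "dF M0 a q e2 = 0" unfolding e1_def e2_def using fo by auto
  have fdw: "fd u0 (x,y) = x *\<^sub>R e1 + y *\<^sub>R e2" for x y
  proof -
    have "(x,y) = x *\<^sub>R b1 + y *\<^sub>R b2" by (simp add: b1_def b2_def)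
    then show ?thesis unfolding e1_def e2_def by (simp add: linear_add[OF lfd] linear_scale[OF lfd])
  qed
  have fddw: "fdd (x,y) u0 = (\<lambda>h. x *\<^sub>R fdd b1 u0 h + y *\<^sub>R fdd b2 u0 h)" for x y
  proof -
    have eqU: "x *\<^sub>R fd u b1 + y *\<^sub>R fd u b2 = fd u (x,y)" if "u \<in> U" for u
    proof -
      have l: "linear (fd u)" using fd[OF that] has_derivative_linear by blast
      have "(x,y) = x *\<^sub>R b1 + y *\<^sub>R b2" by (simp add: b1_def b2_def)
      then show ?thesis by (simp add: linear_add[OF l] linear_scale[OF l])
    qed
    have "((\<lambda>u. x *\<^sub>R fd u b1 + y *\<^sub>R fd u b2) has_derivative (\<lambda>h. x *\<^sub>R fdd b1 u0 h + y *\<^sub>R fdd b2 u0 h)) (at u0)"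
      by (intro has_derivative_add has_derivative_scaleR_right fdd U(2))
    then have "((\<lambda>u. fd u (x,y)) has_derivative (\<lambda>h. x *\<^sub>R fdd b1 u0 h + y *\<^sub>R fdd b2 u0 h)) (at u0)"
      by (rule has_derivative_transform_within_open[OF _ U(1) U(2)]) (rule eqU)
    from has_derivative_unique[OF fdd[OF U(2)] this] show ?thesis .
  qed
  have lfdd: "linear (fdd v u0)" for v using fdd[OF U(2)] has_derivative_linear by blast
  define f11 where "f11 = fdd b1 u0 b1"
  define f12 where "f12 = fdd b2 u0 b1"
  define f21 where "f21 = fdd b1 u0 b2"
  define f22 where "f22 = fdd b2 u0 b2"
  have fddww: "fdd (x,y) u0 (x,y) = (x*x) *\<^sub>R f11 + (x*y) *\<^sub>R (f21 + f12) + (y*y) *\<^sub>R f22" for x y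
  proof -
    have bb: "(x,y) = x *\<^sub>R b1 + y *\<^sub>R b2" by (simp add: b1_def b2_def)
    have "fdd b1 u0 (x,y) = x *\<^sub>R f11 + y *\<^sub>R f21" unfolding f11_def f21_def
      by (subst bb) (simp add: linear_add[OF lfdd] linear_scale[OF lfdd])
    moreover have "fdd b2 u0 (x,y) = x *\<^sub>R f12 + y *\<^sub>R f22" unfolding f12_def f22_def
      by (subst bb) (simp add: linear_add[OF lfdd] linear_scale[OF lfdd])
    ultimately show ?thesis unfolding fddw by (simp add: algebra_simps scaleR_add_right)
  qed
  define H11 where "H11 = dg M0 a q e1 n e1 + G (Dn e1) e1 + G n f11"
  define H12 where "H12 = dg M0 a q e1 n e2 + G (Dn e1) e2 + G n f12"
  define H21 where "H21 = dg M0 a q e2 n e1 + G (Dn e2) e1 + G n f21"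
  define H22 where "H22 = dg M0 a q e2 n e2 + G (Dn e2) e2 + G n f22"
  have quad: "H11*x^2 + (H12+H21)*x*y + H22*y^2 \<le> 0" for x y
  proof -
    have Dn': "(nvec M0 a has_derivative Dn) (at (f u0))" using Dn by (simp add: q_def)
    have "dg M0 a (f u0) (fd u0 (x,y)) (nvec M0 a (f u0)) (fd u0 (x,y))
     + kerr_g M0 a (f u0) (Dn (fd u0 (x,y))) (fd u0 (x,y))
     + kerr_g M0 a (f u0) (nvec M0 a (f u0)) (fdd (x,y) u0 (x,y)) \<le> 0"
      by (rule quad_nonpos[OF a U fd fdd fOm fmax Dn'])
    moreover have "dg M0 a (f u0) (fd u0 (x,y)) (nvec M0 a (f u0)) (fd u0 (x,y))
     + kerr_g M0 a (f u0) (Dn (fd u0 (x,y))) (fd u0 (x,y))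
     + kerr_g M0 a (f u0) (nvec M0 a (f u0)) (fdd (x,y) u0 (x,y)) = H11*x^2 + (H12+H21)*x*y + H22*y^2"
      unfolding fdw fddww H11_def H12_def H21_def H22_def q_def[symmetric] n_def[symmetric] G_def
      using lDn by (simp add: dg_addX[OF Rq] dg_lin3 dg_lin4 g_lin1 g_lin2 g_lin3 g_lin4 linear_add linear_scale
         algebra_simps power2_eq_square)
    ultimately show ?thesis by simp
  qed
  have trH: "Tr (G e1 e1) (G e1 e2) (G e2 e2) H11 H12 H21 H22 \<le> 0"
    unfolding Tr_def G_def e1_def e2_def b1_def b2_def
    by (rule trace_nonpos[OF h1[folded q_def] h2[folded q_def]]) (rule quad[unfolded G_def e1_def e2_def b1_def b2_def])
  have oder: "dg M0 a q (fd u0 v) (M q) (fd u0 w) + G (Md u0 v) (fd u0 w) + G (M q) (fdd w u0 v) = 0"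
    if Md: "\<And>u. u \<in> U \<Longrightarrow> ((M \<circ> f) has_derivative Md u) (at u)"
      and z: "\<And>u w. u \<in> U \<Longrightarrow> kerr_g M0 a (f u) (M (f u)) (fd u w) = 0" for M Md v w
    unfolding q_def G_def by (rule ortho_deriv[OF U fd fdd Md z]) (use Rq q_def in auto)
  have oL11: "dg M0 a q e1 L e1 + G (Ld u0 b1) e1 + G L f11 = 0"
    using oder[OF Ld ol, of b1 b1] unfolding L_def e1_def f11_def .
  have oL12: "dg M0 a q e1 L e2 + G (Ld u0 b1) e2 + G L f12 = 0"
    using oder[OF Ld ol, of b1 b2] unfolding L_def e1_def e2_def f12_def .
  have oL21: "dg M0 a q e2 L e1 + G (Ld u0 b2) e1 + G L f21 = 0"
    using oder[OF Ld ol, of b2 b1] unfolding L_def e1_def e2_def f21_def .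
  have oL22: "dg M0 a q e2 L e2 + G (Ld u0 b2) e2 + G L f22 = 0"
    using oder[OF Ld ol, of b2 b2] unfolding L_def e2_def f22_def .
  have oK11: "dg M0 a q e1 K e1 + G (Kd u0 b1) e1 + G K f11 = 0"
    using oder[OF Kd ok, of b1 b1] unfolding K_def e1_def f11_def .
  have oK12: "dg M0 a q e1 K e2 + G (Kd u0 b1) e2 + G K f12 = 0"
    using oder[OF Kd ok, of b1 b2] unfolding K_def e1_def e2_def f12_def .
  have oK21: "dg M0 a q e2 K e1 + G (Kd u0 b2) e1 + G K f21 = 0"
    using oder[OF Kd ok, of b2 b1] unfolding K_def e1_def e2_def f21_def .
  have oK22: "dg M0 a q e2 K e2 + G (Kd u0 b2) e2 + G K f22 = 0"
    using oder[OF Kd ok, of b2 b2] unfolding K_def e2_def f22_def .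
  have tL: "G L e1 = 0" "G L e2 = 0" "G K e1 = 0" "G K e2 = 0"
    unfolding G_def L_def K_def e1_def e2_def q_def using ol[OF U(2)] ok[OF U(2)] by auto
  have nL: "G L L = 0" "G K K = 0" "G K L = -1"
    using fl fk kl unfolding future_null_def G_def L_def K_def q_def by auto
  have nLs: "G L K = -1" using nL(3) g_sym unfolding G_def by metis
  define \<alpha> where "\<alpha> = - dF M0 a q K"
  define \<beta> where "\<beta> = - dF M0 a q L"
  have al: "0 \<le> \<alpha>" unfolding \<alpha>_def using future_dF[OF F(1,2)] fk unfolding K_def q_def by simp
  have be: "0 \<le> \<beta>" unfolding \<beta>_def using future_dF[OF F(1,2)] fl unfolding L_def q_def by simp
  have gn: "G n X = dF M0 a q X" for X unfolding G_def n_def using n_g[OF F(1,2)] .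
  have nd: "n = \<alpha> *\<^sub>R L + \<beta> *\<^sub>R K"
  proof -
    define t where "t = n - \<alpha> *\<^sub>R L - \<beta> *\<^sub>R K"
    have gs: "G t X = G n X - \<alpha> * G L X - \<beta> * G K X" for X
      unfolding t_def G_def by (simp add: g_lin5 g_lin2)
    have s1: "0 < kerr_g M0 a q e1 e1" using h1 unfolding q_def e1_def b1_def .
    have s2: "0 < kerr_g M0 a q e1 e1 * kerr_g M0 a q e2 e2 - (kerr_g M0 a q e1 e2)^2"
        using h2 unfolding q_def e1_def e2_def b1_def b2_def .
    have s3: "kerr_g M0 a q L e1 = 0" "kerr_g M0 a q L e2 = 0" "kerr_g M0 a q K e1 = 0" "kerr_g M0 a q K e2 = 0"
        using tL unfolding G_def by auto
    have s4: "kerr_g M0 a q L L = 0" "kerr_g M0 a q K K = 0" "kerr_g M0 a q K L = -1"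
        using nL unfolding G_def by auto
    have s5: "kerr_g M0 a q t e1 = 0" using gs[of e1] tL gn fo1 unfolding G_def by simp
    have s6: "kerr_g M0 a q t e2 = 0" using gs[of e2] tL gn fo2 unfolding G_def by simp
    have s7: "kerr_g M0 a q t L = 0" using gs[of L] nL nLs gn unfolding G_def \<beta>_def by simp
    have s8: "kerr_g M0 a q t K = 0" using gs[of K] nL nLs gn unfolding G_def \<alpha>_def by simp
    have "t = 0" by (rule span_zero4[OF s1 s2 s3 s4 s5 s6 s7 s8])
    then show ?thesis unfolding t_def by (simp add: algebra_simps)
  qed
  define Bl11 where "Bl11 = kerr_B M0 a q e1 e1 (Ld u0 b1) L"
  define Bl12 where "Bl12 = kerr_B M0 a q e1 e2 (Ld u0 b1) L"
  define Bl21 where "Bl21 = kerr_B M0 a q e2 e1 (Ld u0 b2) L"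
  define Bl22 where "Bl22 = kerr_B M0 a q e2 e2 (Ld u0 b2) L"
  define Bk11 where "Bk11 = kerr_B M0 a q e1 e1 (Kd u0 b1) K"
  define Bk12 where "Bk12 = kerr_B M0 a q e1 e2 (Kd u0 b1) K"
  define Bk21 where "Bk21 = kerr_B M0 a q e2 e1 (Kd u0 b2) K"
  define Bk22 where "Bk22 = kerr_B M0 a q e2 e2 (Kd u0 b2) K"
  define Q where "Q = (\<lambda>X Y. dg M0 a q X n Y / 2 - dg M0 a q Y X n / 2 + dg M0 a q n X Y / 2 + G (Dn X) Y)"
  note HD = H_decomp[OF Rq _ _ nd]
  have Hd11: "H11 = - \<alpha> * Bl11 - \<beta> * Bk11 + Q e1 e1"
    unfolding H11_def Bl11_def Bk11_def Q_def G_def by (rule HD) (use oL11 oK11 in \<open>simp_all add: G_def\<close>)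
  have Hd12: "H12 = - \<alpha> * Bl12 - \<beta> * Bk12 + Q e1 e2"
    unfolding H12_def Bl12_def Bk12_def Q_def G_def by (rule HD) (use oL12 oK12 in \<open>simp_all add: G_def\<close>)
  have Hd21: "H21 = - \<alpha> * Bl21 - \<beta> * Bk21 + Q e2 e1"
    unfolding H21_def Bl21_def Bk21_def Q_def G_def by (rule HD) (use oL21 oK21 in \<open>simp_all add: G_def\<close>)
  have Hd22: "H22 = - \<alpha> * Bl22 - \<beta> * Bk22 + Q e2 e2"
    unfolding H22_def Bl22_def Bk22_def Q_def G_def by (rule HD) (use oL22 oK22 in \<open>simp_all add: G_def\<close>)
  define R where "R = kerr_rho2 a q"
  define c1 where "c1 = e1$3 * R"
  define c2 where "c2 = e2$3 * R"
  define p1 where "p1 = e1 - c1 *\<^sub>R n"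
  define p2 where "p2 = e2 - c2 *\<^sub>R n"
  have Rp: "0 < R" using F unfolding R_def by simp
  have sp: "0 < sq M0 a (q$2)" using F by simp
  have flat: "e$2 - (e$3 * R) * n$2 = 0" "e$3 - (e$3 * R) * n$3 = 0" if "dF M0 a q e = 0" for e
  proof -
    have "e$2 = - sq M0 a (q$2) * e$3" using that sp unfolding dF_def by (simp add: field_simps)
    then show "e$2 - (e$3 * R) * n$2 = 0" unfolding n_def nvec_comp R_def using Rp R_def by simp
    show "e$3 - (e$3 * R) * n$3 = 0" unfolding n_def nvec_comp R_def using Rp R_def by simp
  qed
  have p1f: "p1$2 = 0" "p1$3 = 0" using flat[OF fo1] unfolding p1_def c1_def by simp_all
  have p2f: "p2$2 = 0" "p2$3 = 0" using flat[OF fo2] unfolding p2_def c2_def by simp_all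
  have e1d: "e1 = p1 + c1 *\<^sub>R n" and e2d: "e2 = p2 + c2 *\<^sub>R n" unfolding p1_def p2_def by simp_all
  have nn: "\<And>Z. dg M0 a q Z n n + 2 * kerr_g M0 a q (Dn Z) n = 0"
    unfolding n_def by (rule nn_deriv[OF a qO Dn])
  have nY: "\<And>Z Y. Y$2 = 0 \<Longrightarrow> Y$3 = 0 \<Longrightarrow> dg M0 a q Z n Y + kerr_g M0 a q (Dn Z) Y = 0"
    unfolding n_def by (rule nY_deriv[OF a qO Dn])
  have Dz: "\<And>Y. Y$2 = 0 \<Longrightarrow> Y$3 = 0 \<Longrightarrow> Dn Y = 0" by (rule Dn_flat[OF Dn])
  have QQ: "Q X Y = dg M0 a q n P P' / 2"
    if "P$2 = 0" "P$3 = 0" "P'$2 = 0" "P'$3 = 0" "X = P + c *\<^sub>R n" "Y = P' + c' *\<^sub>R n" for X Y P P' c c'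
    unfolding Q_def G_def by (rule Q_flat[OF Rq lDn that(1-4) nn nY Dz that(5,6)])
  have hh: "G X Y = G P P'"
    if "P$2 = 0" "P$3 = 0" "P'$2 = 0" "P'$3 = 0" "X = P + c *\<^sub>R n" "Y = P' + c' *\<^sub>R n" for X Y P P' c c'
    unfolding G_def by (rule h_flat[OF sp F(2) that[unfolded n_def]])
  define x1 where "x1 = p1$1"
  define y1 where "y1 = p1$4"
  define x2 where "x2 = p2$1"
  define y2 where "y2 = p2$4"
  define G11 where "G11 = kerr_comp M0 a q 1 1"
  define G14 where "G14 = kerr_comp M0 a q 1 4"
  define G44 where "G44 = kerr_comp M0 a q 4 4"
  define D11 where "D11 = dcomp M0 a q n 1 1"
  define D14 where "D14 = dcomp M0 a q n 1 4"
  define D44 where "D44 = dcomp M0 a q n 4 4"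
  have hf: "G P P' = P$1 * P'$1 * G11 + (P$1 * P'$4 + P$4 * P'$1) * G14 + P$4 * P'$4 * G44"
    if "P$2 = 0" "P$3 = 0" "P'$2 = 0" "P'$3 = 0" for P P'
    unfolding G_def G11_def G14_def G44_def by (rule g_flat[OF that])
  have df: "dg M0 a q n P P' = P$1 * P'$1 * D11 + (P$1 * P'$4 + P$4 * P'$1) * D14 + P$4 * P'$4 * D44"
    if "P$2 = 0" "P$3 = 0" "P'$2 = 0" "P'$3 = 0" for P P'
    unfolding D11_def D14_def D44_def by (rule dg_flat2[OF that])
  have Q11: "Q e1 e1 = (x1*x1*D11 + (x1*y1 + y1*x1)*D14 + y1*y1*D44)/2"
    using QQ[OF p1f p1f e1d e1d] df[OF p1f p1f] unfolding x1_def y1_def by simp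
  have Q12: "Q e1 e2 = (x1*x2*D11 + (x1*y2 + y1*x2)*D14 + y1*y2*D44)/2"
    using QQ[OF p1f p2f e1d e2d] df[OF p1f p2f] unfolding x1_def y1_def x2_def y2_def by simp
  have Q21: "Q e2 e1 = (x2*x1*D11 + (x2*y1 + y2*x1)*D14 + y2*y1*D44)/2"
    using QQ[OF p2f p1f e2d e1d] df[OF p2f p1f] unfolding x1_def y1_def x2_def y2_def by simp
  have Q22: "Q e2 e2 = (x2*x2*D11 + (x2*y2 + y2*x2)*D14 + y2*y2*D44)/2"
    using QQ[OF p2f p2f e2d e2d] df[OF p2f p2f] unfolding x2_def y2_def by simp
  have h11: "G e1 e1 = x1*x1*G11 + (x1*y1 + y1*x1)*G14 + y1*y1*G44"
    using hh[OF p1f p1f e1d e1d] hf[OF p1f p1f] unfolding x1_def y1_def by simp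
  have h12: "G e1 e2 = x1*x2*G11 + (x1*y2 + y1*x2)*G14 + y1*y2*G44"
    using hh[OF p1f p2f e1d e2d] hf[OF p1f p2f] unfolding x1_def y1_def x2_def y2_def by simp
  have h22: "G e2 e2 = x2*x2*G11 + (x2*y2 + y2*x2)*G14 + y2*y2*G44"
    using hh[OF p2f p2f e2d e2d] hf[OF p2f p2f] unfolding x2_def y2_def by simp
  have trQ: "Tr (G e1 e1) (G e1 e2) (G e2 e2) (Q e1 e1) (Q e1 e2) (Q e2 e1) (Q e2 e2)
       = (x1*y2 - x2*y1)^2 * (G44*D11 - 2*G14*D14 + G11*D44) / 2"
    unfolding Tr_def h11 h12 h22 Q11 Q12 Q21 Q22 by (rule T_identity)
  have dt: "G e1 e1 * G e2 e2 - (G e1 e2)^2 = (x1*y2 - x2*y1)^2 * (G11*G44 - G14^2)"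
    unfolding h11 h12 h22 by (rule det_identity)
  have dtp: "0 < G e1 e1 * G e2 e2 - (G e1 e2)^2"
    using h2 unfolding G_def q_def e1_def e2_def b1_def b2_def .
  have detnz: "0 < (x1*y2 - x2*y1)^2"
  proof -
    have "(x1*y2 - x2*y1)^2 \<noteq> 0" using dtp dt by auto
    then show ?thesis by simp
  qed
  have P0: "0 < G44*D11 - 2*G14*D14 + G11*D44"
  proof -
    have "G44*D11 - 2*G14*D14 + G11*D44 =
      (2*M0 - 2*q$2) * n$2 * (sin (q$3))^2 + (2*M0*q$2 - a^2 - (q$2)^2) * (2 * sin (q$3) * cos (q$3) * n$3)"
      using detG_deriv[OF a qO, of n] unfolding G11_def G14_def G44_def D11_def D14_def D44_def
      by (simp add: algebra_simps)
    also have "\<dots> > 0" unfolding n_def using P0_pos[OF a fX[folded q_def]] .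
    finally show ?thesis .
  qed
  have trQp: "0 < Tr (G e1 e1) (G e1 e2) (G e2 e2) (Q e1 e1) (Q e1 e2) (Q e2 e1) (Q e2 e2)"
    unfolding trQ using detnz P0 by simp
  have trBl: "Tr (G e1 e1) (G e1 e2) (G e2 e2) Bl11 Bl12 Bl21 Bl22 \<le> 0"
    unfolding G_def e1_def e2_def b1_def b2_def Bl11_def Bl12_def Bl21_def Bl22_def L_def q_def
    by (rule exl)
  have trBk: "Tr (G e1 e1) (G e1 e2) (G e2 e2) Bk11 Bk12 Bk21 Bk22 \<le> 0"
    unfolding G_def e1_def e2_def b1_def b2_def Bk11_def Bk12_def Bk21_def Bk22_def K_def q_def
    by (rule exk)
  have "Tr (G e1 e1) (G e1 e2) (G e2 e2) H11 H12 H21 H22 =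
     - \<alpha> * Tr (G e1 e1) (G e1 e2) (G e2 e2) Bl11 Bl12 Bl21 Bl22
     - \<beta> * Tr (G e1 e1) (G e1 e2) (G e2 e2) Bk11 Bk12 Bk21 Bk22
     + Tr (G e1 e1) (G e1 e2) (G e2 e2) (Q e1 e1) (Q e1 e2) (Q e2 e1) (Q e2 e2)"
    unfolding Tr_def Hd11 Hd12 Hd21 Hd22 by (simp add: algebra_simps)
  moreover have "0 \<le> - \<alpha> * Tr (G e1 e1) (G e1 e2) (G e2 e2) Bl11 Bl12 Bl21 Bl22"
    using al trBl by (simp add: mult_nonneg_nonpos)
  moreover have "0 \<le> - \<beta> * Tr (G e1 e1) (G e1 e2) (G e2 e2) Bk11 Bk12 Bk21 Bk22"
    using be trBk by (simp add: mult_nonneg_nonpos)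
  ultimately have "0 < Tr (G e1 e1) (G e1 e2) (G e2 e2) H11 H12 H21 H22" using trQp by linarith
  then show False using trH by simp
qed


lemma no_cmts:
  assumes a: "0 < a" "a < M0" and SX: "S \<subseteq> region_X M0 a"
    and cm: "closed_marginally_trapped_surface M0 a S"
  shows False
proof -
  have cs: "closed_surface M0 a S" using cm unfolding closed_marginally_trapped_surface_def by blast
  obtain l k where nnp: "null_normal_pair M0 a S l k"
    and ex: "\<And>f U W u. surface_chart S f U W \<Longrightarrow> u \<in> U \<Longrightarrow> expansion M0 a l f u \<le> 0 \<and> expansion M0 a k f u \<le> 0"
    using cm unfolding closed_marginally_trapped_surface_def by blast
  obtain q where qS: "q \<in> S" and qmax: "\<forall>p\<in>S. Fn M0 a p \<le> Fn M0 a q"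
    using max_point[OF a SX cs] by blast
  have emb: "embedded_surface S" and sps: "spacelike_surface M0 a S"
    using cs unfolding closed_surface_def by auto
  obtain f U W where ch: "surface_chart S f U W" and qW: "q \<in> W"
    using emb qS unfolding embedded_surface_def by blast
  have Uo: "open U" and sm: "smooth_on U f" and hom: "\<exists>g. homeomorphism U (S \<inter> W) f g"
    using ch unfolding surface_chart_def by auto
  have img: "f ` U = S \<inter> W" using hom unfolding homeomorphism_def by blast
  obtain u0 where u0: "u0 \<in> U" "f u0 = q" using img qS qW by (metis IntI imageE)
  have fS: "f u \<in> S" if "u \<in> U" for u using img that by blast
  have fOm: "f u \<in> Om M0 a" if "u \<in> U" for u using fS[OF that] SX regionX_Om by blast
  have fX: "f u0 \<in> region_X M0 a" using fS[OF u0(1)] SX by blast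
  have fmax: "Fn M0 a (f u) \<le> Fn M0 a (f u0)" if "u \<in> U" for u using qmax fS[OF that] u0(2) by simp
  have "Ck (Suc (Suc 0)) U f" using sm unfolding smooth_on_def by blast
  then obtain fd where fd: "\<forall>x\<in>U. (f has_derivative fd x) (at x)"
      and ck: "\<forall>v. Ck (Suc 0) U (\<lambda>x. fd x v)" by auto
  have "\<forall>v. \<exists>E. \<forall>x\<in>U. ((\<lambda>x. fd x v) has_derivative E x) (at x)"
  proof
    fix v
    have "Ck (Suc 0) U (\<lambda>x. fd x v)" using ck by blast
    then show "\<exists>E. \<forall>x\<in>U. ((\<lambda>x. fd x v) has_derivative E x) (at x)" by (simp only: Ck.simps) blast
  qed
  from choice[OF this] obtain fdd where fdd: "\<forall>v. \<forall>x\<in>U. ((\<lambda>x. fd x v) has_derivative fdd v x) (at x)"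
    by blast
  have nnp1: "smooth_on U (l \<circ> f)" "smooth_on U (k \<circ> f)"
    and nnp2: "\<And>u w. u \<in> U \<Longrightarrow> kerr_g M0 a (f u) (l (f u)) (frechet_derivative f (at u) w) = 0
                  \<and> kerr_g M0 a (f u) (k (f u)) (frechet_derivative f (at u) w) = 0"
    using nnp ch unfolding null_normal_pair_def by blast+
  have pt: "future_null M0 a q (l q)" "future_null M0 a q (k q)" "kerr_g M0 a q (k q) (l q) = -1"
    using nnp qS unfolding null_normal_pair_def by blast+
  have "Ck (Suc 0) U (l \<circ> f)" using nnp1(1) unfolding smooth_on_def by blast
  then obtain Ld where Ld: "\<forall>x\<in>U. ((l \<circ> f) has_derivative Ld x) (at x)" by auto
  have "Ck (Suc 0) U (k \<circ> f)" using nnp1(2) unfolding smooth_on_def by blast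
  then obtain Kd where Kd: "\<forall>x\<in>U. ((k \<circ> f) has_derivative Kd x) (at x)" by auto
  have frf: "frechet_derivative f (at u) = fd u" if "u \<in> U" for u
    using frechet_derivative_at[of f "fd u" u] fd that by simp
  have frl: "frechet_derivative (l \<circ> f) (at u0) = Ld u0"
    using frechet_derivative_at[of "l \<circ> f" "Ld u0" u0] Ld u0(1) by simp
  have frk: "frechet_derivative (k \<circ> f) (at u0) = Kd u0"
    using frechet_derivative_at[of "k \<circ> f" "Kd u0" u0] Kd u0(1) by simp
  have ol: "kerr_g M0 a (f u) (l (f u)) (fd u w) = 0" if "u \<in> U" for u w
    using nnp2[OF that, of w] frf[OF that] by simp
  have ok: "kerr_g M0 a (f u) (k (f u)) (fd u w) = 0" if "u \<in> U" for u w
    using nnp2[OF that, of w] frf[OF that] by simp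
  have spl: "0 < kerr_g M0 a (f u0) (fd u0 (1,0)) (fd u0 (1,0))
     \<and> 0 < kerr_g M0 a (f u0) (fd u0 (1,0)) (fd u0 (1,0)) * kerr_g M0 a (f u0) (fd u0 (0,1)) (fd u0 (0,1))
              - (kerr_g M0 a (f u0) (fd u0 (1,0)) (fd u0 (0,1)))^2"
  proof -
    have "0 < kerr_g M0 a (f u0) (frechet_derivative f (at u0) (1, 0)) (frechet_derivative f (at u0) (1, 0)) \<and>
        0 < kerr_g M0 a (f u0) (frechet_derivative f (at u0) (1, 0)) (frechet_derivative f (at u0) (1, 0)) *
            kerr_g M0 a (f u0) (frechet_derivative f (at u0) (0, 1)) (frechet_derivative f (at u0) (0, 1)) -
            (kerr_g M0 a (f u0) (frechet_derivative f (at u0) (1, 0)) (frechet_derivative f (at u0) (0, 1)))\<^sup>2"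
      using sps ch u0(1) unfolding spacelike_surface_def Let_def ch_e1_def ch_e2_def by blast
    then show ?thesis unfolding frf[OF u0(1)] .
  qed
  have dtp: "0 < kerr_g M0 a (f u0) (fd u0 (1,0)) (fd u0 (1,0)) * kerr_g M0 a (f u0) (fd u0 (0,1)) (fd u0 (0,1))
              - (kerr_g M0 a (f u0) (fd u0 (1,0)) (fd u0 (0,1)))^2" using spl by blast
  have exs: "expansion M0 a l f u0 \<le> 0" "expansion M0 a k f u0 \<le> 0" using ex[OF ch u0(1)] by auto
  have num: "N / D \<le> 0 \<Longrightarrow> 0 < D \<Longrightarrow> N \<le> 0" for N D :: real
    by (simp add: divide_le_0_iff)
  have exl: "Tr (kerr_g M0 a (f u0) (fd u0 (1,0)) (fd u0 (1,0))) (kerr_g M0 a (f u0) (fd u0 (1,0)) (fd u0 (0,1)))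
         (kerr_g M0 a (f u0) (fd u0 (0,1)) (fd u0 (0,1)))
         (kerr_B M0 a (f u0) (fd u0 (1,0)) (fd u0 (1,0)) (Ld u0 (1,0)) (l (f u0)))
         (kerr_B M0 a (f u0) (fd u0 (1,0)) (fd u0 (0,1)) (Ld u0 (1,0)) (l (f u0)))
         (kerr_B M0 a (f u0) (fd u0 (0,1)) (fd u0 (1,0)) (Ld u0 (0,1)) (l (f u0)))
         (kerr_B M0 a (f u0) (fd u0 (0,1)) (fd u0 (0,1)) (Ld u0 (0,1)) (l (f u0))) \<le> 0"
    unfolding Tr_def
    by (rule num[OF exs(1)[unfolded expansion_def Let_def ch_e1_def ch_e2_def frf[OF u0(1)] frl] dtp])
  have exk: "Tr (kerr_g M0 a (f u0) (fd u0 (1,0)) (fd u0 (1,0))) (kerr_g M0 a (f u0) (fd u0 (1,0)) (fd u0 (0,1)))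
         (kerr_g M0 a (f u0) (fd u0 (0,1)) (fd u0 (0,1)))
         (kerr_B M0 a (f u0) (fd u0 (1,0)) (fd u0 (1,0)) (Kd u0 (1,0)) (k (f u0)))
         (kerr_B M0 a (f u0) (fd u0 (1,0)) (fd u0 (0,1)) (Kd u0 (1,0)) (k (f u0)))
         (kerr_B M0 a (f u0) (fd u0 (0,1)) (fd u0 (1,0)) (Kd u0 (0,1)) (k (f u0)))
         (kerr_B M0 a (f u0) (fd u0 (0,1)) (fd u0 (0,1)) (Kd u0 (0,1)) (k (f u0))) \<le> 0"
    unfolding Tr_def
    by (rule num[OF exs(2)[unfolded expansion_def Let_def ch_e1_def ch_e2_def frf[OF u0(1)] frk] dtp])
  show False
  proof (rule chart_contra[OF a Uo u0(1), where f=f and fd=fd and fdd=fdd and l=l and k=k and Ld=Ld and Kd=Kd])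
    show "\<And>u. u \<in> U \<Longrightarrow> (f has_derivative fd u) (at u)" using fd by blast
    show "\<And>v u. u \<in> U \<Longrightarrow> ((\<lambda>x. fd x v) has_derivative fdd v u) (at u)" using fdd by blast
    show "\<And>u. u \<in> U \<Longrightarrow> f u \<in> Om M0 a" by (rule fOm)
    show "f u0 \<in> region_X M0 a" by (rule fX)
    show "\<And>u. u \<in> U \<Longrightarrow> Fn M0 a (f u) \<le> Fn M0 a (f u0)" by (rule fmax)
    show "\<And>u. u \<in> U \<Longrightarrow> ((l \<circ> f) has_derivative Ld u) (at u)" using Ld by blast
    show "\<And>u. u \<in> U \<Longrightarrow> ((k \<circ> f) has_derivative Kd u) (at u)" using Kd by blast
    show "\<And>u w. u \<in> U \<Longrightarrow> kerr_g M0 a (f u) (l (f u)) (fd u w) = 0" by (rule ol)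
    show "\<And>u w. u \<in> U \<Longrightarrow> kerr_g M0 a (f u) (k (f u)) (fd u w) = 0" by (rule ok)
    show "future_null M0 a (f u0) (l (f u0))" "future_null M0 a (f u0) (k (f u0))"
      "kerr_g M0 a (f u0) (k (f u0)) (l (f u0)) = -1" using pt u0(2) by auto
    show "0 < kerr_g M0 a (f u0) (fd u0 (1,0)) (fd u0 (1,0))" using spl by blast
    show "0 < kerr_g M0 a (f u0) (fd u0 (1,0)) (fd u0 (1,0)) * kerr_g M0 a (f u0) (fd u0 (0,1)) (fd u0 (0,1))
              - (kerr_g M0 a (f u0) (fd u0 (1,0)) (fd u0 (0,1)))^2" by (rule dtp)
  qed (rule exl, rule exk)
qed

theorem mainTheorem13:
  fixes M0 a :: real
  assumes "0 < a" and "a < M0"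
  shows "\<not> (\<exists>S. S \<subseteq> region_X M0 a \<and> closed_trapped_surface M0 a S)
         \<and> \<not> (\<exists>S. S \<subseteq> region_X M0 a \<and> closed_marginally_trapped_surface M0 a S)"
proof -
  have tm: "closed_marginally_trapped_surface M0 a S" if "closed_trapped_surface M0 a S" for S
    using that unfolding closed_trapped_surface_def closed_marginally_trapped_surface_def
    by (meson less_imp_le)
  show ?thesis using no_cmts[OF assms] tm by blast
qed


end
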